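(* Let $X$ and $Y$ be separable real Banach spaces with $Y$ finite-dimensional, and assume that the projective tensor product $X\widehat{\otimes}_\pi Y$ has an octahedral norm. Then there exist $u\in S_{X^{**}}$ such that $\Vert x+u\Vert=1+\Vert x\Vert$ for every $x\in X$, and $y\in S_Y$ such that $\Vert z+u\otimes y\Vert=1+\Vert z\Vert$ for every $z\in X\widehat{\otimes}_\pi Y$ (norm computed in $(X\widehat{\otimes}_\pi Y)^{**}$).
   Context: All Banach spaces are real. $(X\widehat{\otimes}_\pi Y)^*$ is identified with $L(X,Y^* )$ via $T(x\otimes y)=T(x)(y)$. For $u\in X^{**}$ and $y\in Y$, $u\otimes y$ denotes the element of $(X\widehat{\otimes}_\pi Y)^{**}=L(X,Y^* )^*$ given by $T\mapsto u(y\circ T)$, where $(y\circ T)\in X^*$ is $x\mapsto T(x)(y)$. A Banach space $X$ has an octahedral norm if for every finite-dimensional subspace $F$ of $X$ and every $\varepsilon>0$ there exists $x\in S_X$ such that $\Vert f+\lambda x\Vert\ge(1-\varepsilon)(\Vert f\Vert+|\lambda|)$ for all $f\in F$, $\lambda\in\mathbb R$. *)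

theory Defs
  imports "HOL-Analysis.Analysis"
begin

(* The dual of the projective tensor product is identified with L(X,Y^* ) = ('a \<Rightarrow>\<^sub>L ('b \<Rightarrow>\<^sub>L real)),
  and its bidual with L(X,Y^* )* .  The projective tensor product itself is realised as the
  closed linear span of the elementary tensors inside its bidual (canonical isometric embedding).*)

type_synonym ('a,'b) ptensor_bidual = "('a \<Rightarrow>\<^sub>L ('b \<Rightarrow>\<^sub>L real)) \<Rightarrow>\<^sub>L real"

definition bidual_emb :: "'a::real_normed_vector \<Rightarrow> (('a \<Rightarrow>\<^sub>L real) \<Rightarrow>\<^sub>L real)" where
  "bidual_emb x = Blinfun (\<lambda>f. blinfun_apply f x)"

definition ptensor :: "'a::real_normed_vector \<Rightarrow> 'b::real_normed_vector \<Rightarrow> ('a,'b) ptensor_bidual" where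
  "ptensor x y = Blinfun (\<lambda>T. blinfun_apply (blinfun_apply T x) y)"

(* u \<otimes> y for u in X^**, as the functional T \<mapsto> u(y \<circ> T), (y \<circ> T)(x) = T(x)(y)*)
definition bidual_tensor :: "(('a::real_normed_vector \<Rightarrow>\<^sub>L real) \<Rightarrow>\<^sub>L real) \<Rightarrow> 'b::real_normed_vector \<Rightarrow> ('a,'b) ptensor_bidual" where
  "bidual_tensor u y = Blinfun (\<lambda>T. blinfun_apply u (Blinfun (\<lambda>x. blinfun_apply (blinfun_apply T x) y)))"

definition ptensor_space :: "('a::real_normed_vector,'b::real_normed_vector) ptensor_bidual set" where
  "ptensor_space = closure (span {ptensor x y | x y. True})"

(* Octahedral norm on a (closed) subspace E of a normed space: for every finite-dimensional
  subspace F of E (= span of a finite subset of E) and every \<epsilon> > 0 there is x in the unit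
  sphere of E with \<parallel>f + \<lambda>x\<parallel> \<ge> (1-\<epsilon>)(\<parallel>f\<parallel> + |\<lambda>|).*)
definition octahedral_on :: "'v::real_normed_vector set \<Rightarrow> bool" where
  "octahedral_on E \<longleftrightarrow>
    (\<forall>A \<epsilon>. finite A \<and> A \<subseteq> E \<and> \<epsilon> > 0 \<longrightarrow>
      (\<exists>x\<in>E. norm x = 1 \<and>
         (\<forall>f\<in>span A. \<forall>t::real. norm (f + t *\<^sub>R x) \<ge> (1 - \<epsilon>) * (norm f + \<bar>t\<bar>))))"

end

theory Submission
  imports Defs
begin



definition lingraph :: "('v::real_vector \<Rightarrow> real) \<Rightarrow> ('v \<times> real) set \<Rightarrow> bool" where
 "lingraph p G \<longleftrightarrow> subspace G \<and> (\<forall>x a b. (x,a)\<in>G \<longrightarrow> (x,b)\<in>G \<longrightarrow> a=b) \<and> (\<forall>x a. (x,a)\<in>G \<longrightarrow> a \<le> p x)"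

lemma hb_basic:
  fixes p :: "'v::real_vector \<Rightarrow> real"
  assumes sa: "\<And>x y. p (x+y) \<le> p x + p y" and ph: "\<And>c x. c > 0 \<Longrightarrow> p (c *\<^sub>R x) = c * p x"
  shows "\<exists>F. linear F \<and> (\<forall>x. F x \<le> p x)"
proof -
  have p0: "p 0 = 0" using ph[of 2 0] by simp
  let ?A = "{G. lingraph p G}"
  have ne: "?A \<noteq> {}"
  proof -
    have "{(0,0)} \<in> ?A" unfolding lingraph_def
      using subspace_single_0[where ?'a = "'v \<times> real"] by (simp add: p0 zero_prod_def)
    thus ?thesis by blast
  qed
  have ch: "\<Union>C \<in> ?A" if Cne: "C \<noteq> {}" "subset.chain ?A C" for C
  proof -
    have CA: "C \<subseteq> ?A" and lin: "\<And>X Y. X\<in>C \<Longrightarrow> Y\<in>C \<Longrightarrow> X \<subseteq> Y \<or> Y \<subseteq> X"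
      using that(2) unfolding subset.chain_def by auto
    have sub: "\<And>X. X \<in> C \<Longrightarrow> subspace X" using CA unfolding lingraph_def by auto
    have "subspace (\<Union>C)"
      unfolding subspace_def
    proof (intro conjI ballI allI)
      obtain X where "X \<in> C" using Cne by auto
      then show "0 \<in> \<Union>C" using sub subspace_0 by blast
    next
      fix x y assume "x \<in> \<Union>C" "y \<in> \<Union>C"
      then obtain X Y where "x\<in>X" "X\<in>C" "y \<in> Y" "Y\<in>C" by auto
      then show "x + y \<in> \<Union>C" using lin[of X Y] sub subspace_add by blast
    next
      fix c x assume "x \<in> \<Union>C"
      then show "c *\<^sub>R x \<in> \<Union>C" using sub subspace_scale by blast
    qed
    moreover have "\<forall>x a b. (x,a)\<in>\<Union>C \<longrightarrow> (x,b)\<in>\<Union>C \<longrightarrow> a=b"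
    proof (intro allI impI)
      fix x a b assume "(x,a)\<in>\<Union>C" "(x,b)\<in>\<Union>C"
      then obtain X Y where "(x,a)\<in>X" "X\<in>C" "(x,b) \<in> Y" "Y\<in>C" by auto
      then show "a = b" using lin[of X Y] CA unfolding lingraph_def by blast
    qed
    moreover have "\<forall>x a. (x,a)\<in>\<Union>C \<longrightarrow> a \<le> p x" using CA unfolding lingraph_def by blast
    ultimately show ?thesis unfolding lingraph_def by blast
  qed
  obtain M where MA: "M \<in> ?A" and Mmax: "\<And>X. X \<in> ?A \<Longrightarrow> M \<subseteq> X \<Longrightarrow> X = M"
    using subset_Zorn_nonempty[OF ne ch] by blast
  have Msub: "subspace M" and Mfun: "\<And>x a b. (x,a)\<in>M \<Longrightarrow> (x,b)\<in>M \<Longrightarrow> a=b"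
    and Mdom: "\<And>x a. (x,a)\<in>M \<Longrightarrow> a \<le> p x" using MA unfolding lingraph_def by auto
  have Madd: "(x+y, a+b) \<in> M" if "(x,a)\<in>M" "(y,b)\<in>M" for x y a b
    using subspace_add[OF Msub that] by simp
  have Mscale: "(c *\<^sub>R x, c * a) \<in> M" if "(x,a)\<in>M" for x a c
    using subspace_scale[OF Msub that, of c] by simp
  have M0: "(0,0) \<in> M" using subspace_0[OF Msub] by (simp add: zero_prod_def)
  have total: "\<exists>a. (x0,a) \<in> M" for x0
  proof (rule ccontr)
    assume nx: "\<nexists>a. (x0, a) \<in> M"
    define S where "S = (\<lambda>(y,a). a - p (y - x0)) ` M"
    define c where "c = Sup S"
    have Sne: "S \<noteq> {}" using M0 S_def by auto
    have Sbdd: "bdd_above S" unfolding S_def bdd_above_def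
    proof (intro exI[of _ "p x0"] ballI)
      fix s assume "s \<in> (\<lambda>(y,a). a - p (y - x0)) ` M"
      then obtain y a where ya: "(y,a)\<in>M" "s = a - p (y - x0)" by auto
      have "a \<le> p y" using Mdom ya by auto
      also have "p y \<le> p (y - x0) + p x0" using sa[of "y - x0" x0] by simp
      finally show "s \<le> p x0" using ya by simp
    qed
    have c_up: "c \<le> p (y + x0) - a" if "(y,a) \<in> M" for y a
      unfolding c_def
    proof (rule cSup_least[OF Sne])
      fix s assume "s \<in> S"
      then obtain y' a' where ya: "(y',a')\<in>M" "s = a' - p (y' - x0)" unfolding S_def by auto
      have "a + a' \<le> p (y + y')" using Mdom[OF Madd[OF that ya(1)]] .
      also have "\<dots> \<le> p (y' - x0) + p (y + x0)" using sa[of "y' - x0" "y + x0"] by (simp add: add.commute)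
      finally show "s \<le> p (y + x0) - a" using ya by simp
    qed
    have c_low: "a - p (y - x0) \<le> c" if "(y,a) \<in> M" for y a
      unfolding c_def by (rule cSup_upper[OF _ Sbdd]) (use that S_def in auto)
    define M' where "M' = (\<lambda>((y,a),t). (y + t *\<^sub>R x0, a + t * c)) ` (M \<times> UNIV)"
    have inM': "(y + t *\<^sub>R x0, a + t * c) \<in> M'" if "(y,a)\<in>M" for y a t
      unfolding M'_def using that by force
    have "subspace M'"
      unfolding subspace_def
    proof (intro conjI ballI allI)
      show "0 \<in> M'" using inM'[OF M0, of 0] by (simp add: zero_prod_def)
    next
      fix u v assume "u \<in> M'" "v \<in> M'"
      then obtain y1 a1 t1 y2 a2 t2 where "(y1,a1)\<in>M" "(y2,a2)\<in>M"
        "u = (y1 + t1 *\<^sub>R x0, a1 + t1 * c)" "v = (y2 + t2 *\<^sub>R x0, a2 + t2 * c)"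
        unfolding M'_def by fast
      then show "u + v \<in> M'" using inM'[OF Madd, of y1 a1 y2 a2 "t1+t2"]
        by (simp add: algebra_simps scaleR_add_left)
    next
      fix r u assume "u \<in> M'"
      then obtain y1 a1 t1 where "(y1,a1)\<in>M" "u = (y1 + t1 *\<^sub>R x0, a1 + t1 * c)"
        unfolding M'_def by fast
      then show "r *\<^sub>R u \<in> M'" using inM'[OF Mscale, of y1 a1 r "r * t1"]
        by (simp add: algebra_simps scaleR_add_right)
    qed
    moreover have "\<forall>x a b. (x,a)\<in>M' \<longrightarrow> (x,b)\<in>M' \<longrightarrow> a=b"
    proof (intro allI impI)
      fix x a b assume "(x,a)\<in>M'" "(x,b)\<in>M'"
      then obtain y1 a1 t1 y2 a2 t2 where m: "(y1,a1)\<in>M" "(y2,a2)\<in>M"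
        "x = y1 + t1 *\<^sub>R x0" "a = a1 + t1 * c" "x = y2 + t2 *\<^sub>R x0" "b = a2 + t2 * c"
        unfolding M'_def by fast
      have "t1 = t2"
      proof (rule ccontr)
        assume "t1 \<noteq> t2"
        have "(t1 - t2) *\<^sub>R x0 = y2 - y1" using m by (simp add: algebra_simps)
        hence "(1/(t1-t2)) *\<^sub>R ((t1 - t2) *\<^sub>R x0) = (1/(t1-t2)) *\<^sub>R (y2 - y1)" by simp
        hence "x0 = (1/(t1-t2)) *\<^sub>R (y2 - y1)" using \<open>t1 \<noteq> t2\<close> by simp
        moreover have "(y2 - y1, a2 - a1) \<in> M" using Madd[OF m(2) Mscale[OF m(1), of "-1"]] by simp
        ultimately show False using Mscale nx by metis
      qed
      then have "y1 = y2" using m by simp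
      then have "a1 = a2" using Mfun m by blast
      then show "a = b" using m \<open>t1 = t2\<close> by simp
    qed
    moreover have "\<forall>x a. (x,a)\<in>M' \<longrightarrow> a \<le> p x"
    proof (intro allI impI)
      fix x a assume "(x,a)\<in>M'"
      then obtain y b t where m: "(y,b)\<in>M" "x = y + t *\<^sub>R x0" "a = b + t * c"
        unfolding M'_def by fast
      consider "t = 0" | "t > 0" | "t < 0" by linarith
      then show "a \<le> p x"
      proof cases
        case 1 then show ?thesis using m Mdom by simp
      next
        case 2
        have "c \<le> p ((1/t) *\<^sub>R y + x0) - (1/t) * b" using c_up[OF Mscale[OF m(1), of "1/t"]] .
        hence "t * c \<le> t * p ((1/t) *\<^sub>R y + x0) - b" using 2
          by (simp add: field_simps)
        also have "t * p ((1/t) *\<^sub>R y + x0) = p (y + t *\<^sub>R x0)"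
          using ph[OF 2, of "(1/t) *\<^sub>R y + x0"] 2 by (simp add: scaleR_add_right)
        finally show ?thesis using m by simp
      next
        case 3
        define s where "s = -t"
        have s: "s > 0" using 3 s_def by simp
        have "(1/s) * b - p ((1/s) *\<^sub>R y - x0) \<le> c" using c_low[OF Mscale[OF m(1), of "1/s"]] .
        hence "b - s * p ((1/s) *\<^sub>R y - x0) \<le> s * c" using s
          by (simp add: field_simps)
        also have "s * p ((1/s) *\<^sub>R y - x0) = p (y - s *\<^sub>R x0)"
          using ph[OF s, of "(1/s) *\<^sub>R y - x0"] s by (simp add: scaleR_diff_right)
        finally show ?thesis using m s_def by (simp add: algebra_simps)
      qed
    qed
    ultimately have "M' \<in> ?A" unfolding lingraph_def by blast
    moreover have "M \<subseteq> M'" using inM'[of _ _ 0] by auto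
    ultimately have "M' = M" using Mmax by blast
    moreover have "(x0, c) \<in> M'" using inM'[OF M0, of 1] by simp
    ultimately show False using nx by auto
  qed
  define F where "F x = (THE a. (x,a) \<in> M)" for x
  have FM: "(x, F x) \<in> M" for x
    unfolding F_def using total[of x] Mfun by (metis theI)
  have "linear F"
  proof (rule linearI)
    fix x y show "F (x + y) = F x + F y" using Mfun[OF FM Madd[OF FM FM]] .
  next
    fix r x show "F (r *\<^sub>R x) = r *\<^sub>R F x" using Mfun[OF FM Mscale[OF FM]] by simp
  qed
  moreover have "\<forall>x. F x \<le> p x" using FM Mdom by blast
  ultimately show ?thesis by blast
qed

inductive_set cone_gen :: "('v::real_vector \<times> real) set \<Rightarrow> ('v \<times> real) set" for P where
  cg0: "(0,0) \<in> cone_gen P"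
| cgP: "q \<in> P \<Longrightarrow> q \<in> cone_gen P"
| cgadd: "(s1,r1) \<in> cone_gen P \<Longrightarrow> (s2,r2) \<in> cone_gen P \<Longrightarrow> (s1+s2, r1+r2) \<in> cone_gen P"
| cgscale: "(s,r) \<in> cone_gen P \<Longrightarrow> l \<ge> 0 \<Longrightarrow> (l *\<^sub>R s, l*r) \<in> cone_gen P"

lemma mazur_orlicz:
  fixes p :: "'v::real_vector \<Rightarrow> real"
  assumes sa: "\<And>x y. p (x+y) \<le> p x + p y" and ph: "\<And>c x. c > 0 \<Longrightarrow> p (c *\<^sub>R x) = c * p x"
    and K: "\<And>s r. (s,r) \<in> cone_gen P \<Longrightarrow> r \<le> p s"
  shows "\<exists>F. linear F \<and> (\<forall>x. F x \<le> p x) \<and> (\<forall>v c. (v,c)\<in>P \<longrightarrow> c \<le> F v)"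
proof -
  have p0: "p 0 = 0" using ph[of 2 0] by simp
  define Q where "Q w = (\<lambda>(s,r). p (w+s) - r) ` cone_gen P" for w
  define q where "q w = Inf (Q w)" for w
  have Qne: "Q w \<noteq> {}" for w unfolding Q_def using cone_gen.cg0 by blast
  have Qlow: "- p (-w) \<le> x" if xQ: "x \<in> Q w" for w x
  proof -
    obtain s r where sr: "(s,r) \<in> cone_gen P" "x = p (w+s) - r" using xQ unfolding Q_def by auto
    have "p s \<le> p (w+s) + p (-w)" using sa[of "w+s" "-w"] by simp
    then show ?thesis using K[OF sr(1)] sr(2) by simp
  qed
  have Qbdd: "bdd_below (Q w)" for w unfolding bdd_below_def using Qlow by blast
  have q_le: "q w \<le> p (w+s) - r" if "(s,r) \<in> cone_gen P" for w s r
    unfolding q_def by (rule cInf_lower[OF _ Qbdd]) (use that Q_def in force)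
  have q_ge: "z \<le> q w" if "\<And>s r. (s,r) \<in> cone_gen P \<Longrightarrow> z \<le> p (w+s) - r" for z w
    unfolding q_def by (rule cInf_greatest[OF Qne]) (use that Q_def in force)
  have qsa: "q (x+y) \<le> q x + q y" for x y
  proof -
    have "q (x+y) - (p (y+s2) - r2) \<le> q x" if s2: "(s2,r2) \<in> cone_gen P" for s2 r2
    proof (rule q_ge)
      fix s1 r1 assume s1: "(s1,r1) \<in> cone_gen P"
      have "q (x+y) \<le> p (x+y+(s1+s2)) - (r1+r2)" using q_le[OF cone_gen.cgadd[OF s1 s2]] .
      also have "p (x+y+(s1+s2)) \<le> p (x+s1) + p (y+s2)" using sa[of "x+s1" "y+s2"] by (simp add: algebra_simps)
      finally show "q (x+y) - (p (y+s2) - r2) \<le> p (x+s1) - r1" by simp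
    qed
    hence "q (x+y) - q x \<le> q y" by (intro q_ge) (simp add: algebra_simps)
    thus ?thesis by simp
  qed
  have qle: "q (c *\<^sub>R x) \<le> c * q x" if c: "c > 0" for c x
  proof -
    have "q (c *\<^sub>R x) / c \<le> q x"
    proof (rule q_ge)
      fix s r assume sr: "(s,r) \<in> cone_gen P"
      have "q (c *\<^sub>R x) \<le> p (c *\<^sub>R x + c *\<^sub>R s) - c * r" using q_le[OF cone_gen.cgscale[OF sr, of c]] c by simp
      also have "p (c *\<^sub>R x + c *\<^sub>R s) = c * p (x + s)" using ph[OF c, of "x+s"] by (simp add: scaleR_add_right)
      finally show "q (c *\<^sub>R x) / c \<le> p (x + s) - r" using c by (simp add: field_simps)
    qed
    thus ?thesis using c by (simp add: field_simps)
  qed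
  have qph: "q (c *\<^sub>R x) = c * q x" if c: "c > 0" for c x
  proof -
    have "q x = q ((1/c) *\<^sub>R (c *\<^sub>R x))" using c by simp
    also have "\<dots> \<le> (1/c) * q (c *\<^sub>R x)" using qle[of "1/c" "c *\<^sub>R x"] c by simp
    finally have "c * q x \<le> q (c *\<^sub>R x)" using c by (simp add: field_simps)
    thus ?thesis using qle[OF c, of x] by linarith
  qed
  obtain F where F: "linear F" "\<forall>x. F x \<le> q x" using hb_basic[of q, OF qsa qph] by blast
  have "F x \<le> p x" for x using F(2) q_le[OF cone_gen.cg0, of x] by (metis add_0_right diff_zero order_trans)
  moreover have "c \<le> F v" if "(v,c) \<in> P" for v c
  proof -
    have "F (-v) \<le> p (-v + v) - c" using F(2) q_le[OF cone_gen.cgP[OF that], of "-v"] by (metis order_trans)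
    moreover have "F (-v) = - F v" using linear_neg[OF F(1)] .
    ultimately show ?thesis using p0 by simp
  qed
  ultimately show ?thesis using F(1) by blast
qed



lemma compact_span_cball:
  fixes A :: "'v::real_normed_vector set"
  assumes "finite A"
  shows "compact (span A \<inter> cball 0 R)"
  using assms
proof (induction A arbitrary: R rule: finite_induct)
  case empty
  have "span {} \<inter> cball (0::'v) R \<subseteq> {0}" by auto
  then have "finite (span {} \<inter> cball (0::'v) R)" using finite_subset by blast
  then show ?case using finite_imp_compact by blast
next
  case (insert a A)
  show ?case
  proof (cases "a \<in> span A")
    case True
    then have "span (insert a A) = span A" by (simp add: span_redundant)
    then show ?thesis using insert.IH by simp
  next
    case False
    have "a \<notin> closure (span A)"
    proof
      assume acl: "a \<in> closure (span A)"
      have "a \<in> closure (span A \<inter> cball 0 (norm a + 1))"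
        unfolding closure_approachable
      proof (intro allI impI)
        fix e :: real assume "e > 0"
        then obtain y where y: "y \<in> span A" "dist y a < min e 1"
          using acl unfolding closure_approachable by (meson min_less_iff_conj zero_less_one)
        have "norm y \<le> norm a + 1" using y(2) norm_triangle_sub[of y a]
          by (smt (verit) dist_norm min_less_iff_conj norm_minus_commute norm_triangle_ineq2)
        then show "\<exists>y\<in>span A \<inter> cball 0 (norm a + 1). dist y a < e" using y by auto
      qed
      then have "a \<in> span A \<inter> cball 0 (norm a + 1)"
        using compact_imp_closed[OF insert.IH] closure_closed by metis
      then show False using False by simp
    qed
    then obtain d where d: "d > 0" "\<And>y. y \<in> span A \<Longrightarrow> d \<le> dist y a"
      unfolding closure_approachable by (meson not_less)
    have cbound: "\<bar>c\<bar> * d \<le> norm (x + c *\<^sub>R a)" if "x \<in> span A" for x c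
    proof (cases "c = 0")
      case True then show ?thesis by simp
    next
      case False
      have "(-(1/c)) *\<^sub>R x \<in> span A" using that span_scale by blast
      then have "d \<le> dist ((-(1/c)) *\<^sub>R x) a" using d by blast
      also have "dist ((-(1/c)) *\<^sub>R x) a = norm ((1/c) *\<^sub>R (x + c *\<^sub>R a))"
        using False by (simp add: dist_norm algebra_simps norm_minus_commute)
      also have "\<dots> = norm (x + c *\<^sub>R a) / \<bar>c\<bar>" by simp
      finally show ?thesis using False by (simp add: field_simps)
    qed
    define R' where "R' = \<bar>R\<bar> + (\<bar>R\<bar>/d) * norm a"
    define g where "g = (\<lambda>(c::real, x::'v). x + c *\<^sub>R a)"
    define S where "S = g ` ({-\<bar>R\<bar>/d..\<bar>R\<bar>/d} \<times> (span A \<inter> cball 0 R')) \<inter> cball 0 R"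
    have "compact S" unfolding S_def
    proof (rule compact_Int_closed)
      show "compact (g ` ({-\<bar>R\<bar>/d..\<bar>R\<bar>/d} \<times> (span A \<inter> cball 0 R')))"
        by (rule compact_continuous_image) (auto simp: g_def case_prod_unfold intro!: continuous_intros compact_Times insert.IH)
    qed simp
    moreover have "span (insert a A) \<inter> cball 0 R = S"
    proof
      show "span (insert a A) \<inter> cball 0 R \<subseteq> S"
      proof
        fix f assume f: "f \<in> span (insert a A) \<inter> cball 0 R"
        then obtain c where c: "f - c *\<^sub>R a \<in> span A" unfolding span_insert by auto
        define x where "x = f - c *\<^sub>R a"
        have fx: "f = x + c *\<^sub>R a" using x_def by simp
        have nf: "norm f \<le> \<bar>R\<bar>" using f by auto
        have "\<bar>c\<bar> * d \<le> \<bar>R\<bar>" using cbound[OF c[folded x_def], of c] fx nf by simp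
        hence cb: "\<bar>c\<bar> \<le> \<bar>R\<bar>/d" using d(1) by (simp add: field_simps)
        have "norm x \<le> norm f + \<bar>c\<bar> * norm a" using fx norm_triangle_ineq4[of f "c *\<^sub>R a"] x_def by simp
        also have "\<dots> \<le> R'" unfolding R'_def using nf cb mult_right_mono[OF cb norm_ge_zero[of a]] by linarith
        finally have "x \<in> span A \<inter> cball 0 R'" using c x_def by simp
        moreover have "c \<in> {-\<bar>R\<bar>/d..\<bar>R\<bar>/d}" using cb by auto
        ultimately show "f \<in> S" unfolding S_def g_def using f fx by force
      qed
    next
      show "S \<subseteq> span (insert a A) \<inter> cball 0 R"
      proof
        fix f assume "f \<in> S"
        then obtain c x where "x \<in> span A" "f = x + c *\<^sub>R a" "norm f \<le> R" unfolding S_def g_def by auto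
        moreover have "x \<in> span (insert a A)" using \<open>x \<in> span A\<close> span_mono[of A "insert a A"] by blast
        ultimately show "f \<in> span (insert a A) \<inter> cball 0 R"
          by (simp add: span_add span_scale span_base)
      qed
    qed
    ultimately show ?thesis by simp
  qed
qed

lemma near_norm:
  fixes S :: "'v::real_normed_vector \<Rightarrow>\<^sub>L 'w::real_normed_vector"
  assumes "\<eta> > 0"
  shows "\<exists>a. norm a \<le> 1 \<and> norm S - \<eta> \<le> norm (blinfun_apply S a)"
proof (rule ccontr)
  assume "\<not> ?thesis"
  then have H: "\<And>a. norm a \<le> 1 \<Longrightarrow> norm (blinfun_apply S a) < norm S - \<eta>" by force
  have pos: "0 < norm S - \<eta>" using H[of 0] by simp
  have "norm (blinfun_apply S x) \<le> (norm S - \<eta>) * norm x" for x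
  proof (cases "x = 0")
    case True then show ?thesis by simp
  next
    case False
    have "norm (blinfun_apply S ((1/norm x) *\<^sub>R x)) < norm S - \<eta>" using H False by simp
    moreover have "blinfun_apply S ((1/norm x) *\<^sub>R x) = (1/norm x) *\<^sub>R blinfun_apply S x"
      by (simp add: blinfun.scaleR_right)
    ultimately have "norm (blinfun_apply S x) / norm x < norm S - \<eta>" by simp
    then show ?thesis using False by (simp add: field_simps)
  qed
  then have "norm S \<le> norm S - \<eta>" using norm_blinfun_bound pos by (meson less_le)
  then show False using assms by simp
qed

lemma near_fun:
  fixes S :: "'v::real_normed_vector \<Rightarrow>\<^sub>L real"
  assumes "\<eta> > 0"
  shows "\<exists>a. norm a \<le> 1 \<and> norm S - \<eta> \<le> blinfun_apply S a"
proof -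
  obtain a where a: "norm a \<le> 1" "norm S - \<eta> \<le> \<bar>blinfun_apply S a\<bar>" using near_norm[OF assms, of S] by auto
  show ?thesis
  proof (cases "blinfun_apply S a \<ge> 0")
    case True then show ?thesis using a by auto
  next
    case False
    have "blinfun_apply S (-a) = - blinfun_apply S a" by (simp add: blinfun.minus_right)
    then show ?thesis using a False by (intro exI[of _ "-a"]) auto
  qed
qed

lemma oct_scale:
  fixes e :: "'v::real_normed_vector"
  assumes F: "subspace F" and "0 \<le> \<epsilon>" "\<epsilon> \<le> 1"
    and H: "\<And>f. f \<in> F \<Longrightarrow> (1-\<epsilon>)*(norm f + 1) \<le> norm (f + e)"
    and f: "f \<in> F"
  shows "(1-\<epsilon>)*(norm f + \<bar>t\<bar>) \<le> norm (f + t *\<^sub>R e)"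
proof -
  consider "t = 0" | "t > 0" | "t < 0" by linarith
  then show ?thesis
  proof cases
    case 1 then show ?thesis using assms by (simp add: mult_left_le_one_le)
  next
    case 2
    have "(1/t) *\<^sub>R f \<in> F" using F f by (simp add: subspace_scale)
    from H[OF this] have "(1-\<epsilon>)*(norm f / t + 1) \<le> norm ((1/t) *\<^sub>R (f + t *\<^sub>R e))"
      using 2 by (simp add: scaleR_add_right)
    also have "\<dots> = norm (f + t *\<^sub>R e) / t" using 2 by simp
    finally have "t * ((1-\<epsilon>)*(norm f / t + 1)) \<le> norm (f + t *\<^sub>R e)" using 2 by (simp add: field_simps)
    moreover have "t * ((1-\<epsilon>)*(norm f / t + 1)) = (1-\<epsilon>)*(norm f + \<bar>t\<bar>)" using 2 by (simp add: field_simps)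
    ultimately show ?thesis by simp
  next
    case 3
    define s where "s = -t"
    have s: "s > 0" using 3 s_def by simp
    have "(-(1/s)) *\<^sub>R f \<in> F" using F f using subspace_scale[OF F f, of "-(1/s)"] by simp
    from H[OF this] have "(1-\<epsilon>)*(norm f / s + 1) \<le> norm ((-(1/s)) *\<^sub>R (f + t *\<^sub>R e))"
      using s s_def by (simp add: scaleR_add_right)
    also have "\<dots> = norm (f + t *\<^sub>R e) / s" using s by simp
    finally have "s * ((1-\<epsilon>)*(norm f / s + 1)) \<le> norm (f + t *\<^sub>R e)" using s by (simp add: field_simps)
    moreover have "s * ((1-\<epsilon>)*(norm f / s + 1)) = (1-\<epsilon>)*(norm f + \<bar>t\<bar>)" using s s_def by (simp add: field_simps)
    ultimately show ?thesis by simp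
  qed
qed



lemma bl_ev: "bounded_linear (\<lambda>T::('a::real_normed_vector \<Rightarrow>\<^sub>L ('b::real_normed_vector \<Rightarrow>\<^sub>L real)). blinfun_apply (blinfun_apply T x) y)"
  by (intro bounded_linear_compose[OF blinfun.bounded_linear_left[of y]] blinfun.bounded_linear_left)

lemma ptensor_apply[simp]: "blinfun_apply (ptensor x y) T = blinfun_apply (blinfun_apply T x) y"
  unfolding ptensor_def bounded_linear_Blinfun_apply[OF bl_ev] ..

lemma ev_bound: "norm (blinfun_apply (blinfun_apply T x) y) \<le> norm T * norm x * norm y"
proof -
  have "norm (blinfun_apply (blinfun_apply T x) y) \<le> norm (blinfun_apply T x) * norm y" by (rule norm_blinfun)
  also have "\<dots> \<le> norm T * norm x * norm y" by (simp add: mult_right_mono norm_blinfun)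
  finally show ?thesis .
qed

lemma norm_ptensor: "norm (ptensor x y) \<le> norm x * norm y"
proof (rule norm_blinfun_bound)
  fix T show "norm (blinfun_apply (ptensor x y) T) \<le> norm x * norm y * norm T"
    using ev_bound[of T x y] by (simp add: algebra_simps)
qed simp

lemma ptensor_add_left: "ptensor (x1 + x2) y = ptensor x1 y + ptensor x2 y"
  by (rule blinfun_eqI) (simp add: blinfun.add_left blinfun.add_right blinfun.diff_left blinfun.diff_right blinfun.scaleR_left blinfun.scaleR_right)
lemma ptensor_add_right: "ptensor x (y1 + y2) = ptensor x y1 + ptensor x y2"
  by (rule blinfun_eqI) (simp add: blinfun.add_left blinfun.add_right blinfun.diff_left blinfun.diff_right blinfun.scaleR_left blinfun.scaleR_right)
lemma ptensor_scale_left: "ptensor (c *\<^sub>R x) y = c *\<^sub>R ptensor x y"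
  by (rule blinfun_eqI) (simp add: blinfun.add_left blinfun.add_right blinfun.diff_left blinfun.diff_right blinfun.scaleR_left blinfun.scaleR_right)
lemma ptensor_scale_right: "ptensor x (c *\<^sub>R y) = c *\<^sub>R ptensor x y"
  by (rule blinfun_eqI) (simp add: blinfun.add_left blinfun.add_right blinfun.diff_left blinfun.diff_right blinfun.scaleR_left blinfun.scaleR_right)
lemma ptensor_diff_left: "ptensor (x1 - x2) y = ptensor x1 y - ptensor x2 y"
  by (rule blinfun_eqI) (simp add: blinfun.add_left blinfun.add_right blinfun.diff_left blinfun.diff_right blinfun.scaleR_left blinfun.scaleR_right)
lemma ptensor_diff_right: "ptensor x (y1 - y2) = ptensor x y1 - ptensor x y2"
  by (rule blinfun_eqI) (simp add: blinfun.add_left blinfun.add_right blinfun.diff_left blinfun.diff_right blinfun.scaleR_left blinfun.scaleR_right)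

lemma ptensor_cont: "norm (ptensor x y - ptensor x' y') \<le> norm (x - x') * norm y + norm x' * norm (y - y')"
proof -
  have "ptensor x y - ptensor x' y' = ptensor (x - x') y + ptensor x' (y - y')"
    by (simp add: ptensor_diff_left ptensor_diff_right)
  then show ?thesis using norm_triangle_le[OF add_mono[OF norm_ptensor norm_ptensor]] by simp
qed

definition ycomp :: "('a::real_normed_vector \<Rightarrow>\<^sub>L ('b::real_normed_vector \<Rightarrow>\<^sub>L real)) \<Rightarrow> 'b \<Rightarrow> ('a \<Rightarrow>\<^sub>L real)" where
  "ycomp T y = Blinfun (\<lambda>x. blinfun_apply (blinfun_apply T x) y)"

lemma bl_ycomp: "bounded_linear (\<lambda>x. blinfun_apply (blinfun_apply T x) y)"
  by (intro bounded_linear_compose[OF blinfun.bounded_linear_left[of y]] blinfun.bounded_linear_right)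

lemma ycomp_apply[simp]: "blinfun_apply (ycomp T y) x = blinfun_apply (blinfun_apply T x) y"
  unfolding ycomp_def bounded_linear_Blinfun_apply[OF bl_ycomp] ..

lemma norm_ycomp: "norm (ycomp T y) \<le> norm T * norm y"
proof (rule norm_blinfun_bound)
  fix x show "norm (blinfun_apply (ycomp T y) x) \<le> norm T * norm y * norm x"
    using ev_bound[of T x y] by (simp add: algebra_simps)
qed simp

lemma bl_bt: "bounded_linear (\<lambda>T. blinfun_apply u (ycomp T y))"
proof (rule bounded_linear_intro[where K = "norm u * norm y"])
  fix T1 T2 show "blinfun_apply u (ycomp (T1 + T2) y) = blinfun_apply u (ycomp T1 y) + blinfun_apply u (ycomp T2 y)"
  proof -
    have "ycomp (T1 + T2) y = ycomp T1 y + ycomp T2 y" by (rule blinfun_eqI) (simp add: blinfun.add_left blinfun.add_right blinfun.diff_left blinfun.diff_right blinfun.scaleR_left blinfun.scaleR_right)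
    then show ?thesis by (simp add: blinfun.add_right)
  qed
next
  fix r T show "blinfun_apply u (ycomp (r *\<^sub>R T) y) = r *\<^sub>R blinfun_apply u (ycomp T y)"
  proof -
    have "ycomp (r *\<^sub>R T) y = r *\<^sub>R ycomp T y" by (rule blinfun_eqI) (simp add: blinfun.add_left blinfun.add_right blinfun.diff_left blinfun.diff_right blinfun.scaleR_left blinfun.scaleR_right)
    then show ?thesis by (simp add: blinfun.scaleR_right)
  qed
next
  fix T
  have "norm (blinfun_apply u (ycomp T y)) \<le> norm u * norm (ycomp T y)" by (rule norm_blinfun)
  also have "\<dots> \<le> norm u * (norm T * norm y)" by (simp add: mult_left_mono norm_ycomp)
  finally show "norm (blinfun_apply u (ycomp T y)) \<le> norm T * (norm u * norm y)" by (simp add: algebra_simps)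
qed

lemma bt_apply[simp]: "blinfun_apply (bidual_tensor u y) T = blinfun_apply u (ycomp T y)"
  unfolding bidual_tensor_def ycomp_def[symmetric] bounded_linear_Blinfun_apply[OF bl_bt] ..

lemma norm_bt: "norm (bidual_tensor u y) \<le> norm u * norm y"
proof (rule norm_blinfun_bound)
  fix T
  have "norm (blinfun_apply u (ycomp T y)) \<le> norm u * norm (ycomp T y)" by (rule norm_blinfun)
  also have "\<dots> \<le> norm u * (norm T * norm y)" by (simp add: mult_left_mono norm_ycomp)
  finally show "norm (blinfun_apply (bidual_tensor u y) T) \<le> norm u * norm y * norm T" by (simp add: algebra_simps)
qed simp

lemma be_apply[simp]: "blinfun_apply (bidual_emb x) g = blinfun_apply g x"
  unfolding bidual_emb_def bounded_linear_Blinfun_apply[OF blinfun.bounded_linear_left] ..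

lemma norm_be: "norm (bidual_emb x) \<le> norm x"
proof (rule norm_blinfun_bound)
  fix g show "norm (blinfun_apply (bidual_emb x) g) \<le> norm x * norm g"
    using norm_blinfun[of g x] by (simp add: algebra_simps)
qed simp



lemma linear_bounded_by_norm:
  fixes G :: "'v::real_normed_vector \<Rightarrow> real"
  assumes G: "linear G" "\<And>v. G v \<le> norm v"
  shows "\<bar>G v\<bar> \<le> norm v" "bounded_linear G"
proof -
  show ab: "\<bar>G v\<bar> \<le> norm v" for v
    using G(2)[of v] G(2)[of "-v"] linear_neg[OF G(1), of v] by simp
  show "bounded_linear G"
    by (rule bounded_linear_intro[where K=1]) (use linear_add[OF G(1)] linear_scale[OF G(1)] ab in auto)
qed

lemma functional_to_T:
  fixes G :: "('a::real_normed_vector,'b::real_normed_vector) ptensor_bidual \<Rightarrow> real"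
  assumes G: "linear G" "\<And>v. G v \<le> norm v"
  shows "\<exists>T. norm T \<le> 1 \<and> (\<forall>x y. blinfun_apply (blinfun_apply T x) y = G (ptensor x y)) \<and>
             (\<forall>v\<in>ptensor_space. blinfun_apply v T = G v)"
proof -
  note ab = linear_bounded_by_norm[OF G]
  have Gadd: "G (u + v) = G u + G v" for u v using linear_add[OF G(1)] .
  have Gsc: "G (c *\<^sub>R u) = c * G u" for c u using linear_scale[OF G(1)] by simp
  have Gb: "norm (G (ptensor x y)) \<le> norm x * norm y" for x y
    using ab(1)[of "ptensor x y"] norm_ptensor[of x y] by simp
  define inner where "inner x = Blinfun (\<lambda>y. G (ptensor x y))" for x
  have bli: "bounded_linear (\<lambda>y. G (ptensor x y))" for x
    by (rule bounded_linear_intro[where K="norm x"])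
       (use Gb in \<open>auto simp: ptensor_add_right ptensor_scale_right Gadd Gsc mult.commute\<close>)
  have inner_apply: "blinfun_apply (inner x) y = G (ptensor x y)" for x y
    unfolding inner_def bounded_linear_Blinfun_apply[OF bli] ..
  have ninner: "norm (inner x) \<le> norm x" for x
  proof (rule norm_blinfun_bound)
    fix y show "norm (blinfun_apply (inner x) y) \<le> norm x * norm y" using Gb inner_apply by simp
  qed simp
  have blo: "bounded_linear inner"
  proof (rule bounded_linear_intro[where K=1])
    fix x1 x2 show "inner (x1 + x2) = inner x1 + inner x2"
      by (rule blinfun_eqI) (simp add: inner_apply ptensor_add_left Gadd blinfun.add_left)
  next
    fix r x show "inner (r *\<^sub>R x) = r *\<^sub>R inner x"
      by (rule blinfun_eqI) (simp add: inner_apply ptensor_scale_left Gsc blinfun.scaleR_left)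
  next
    fix x show "norm (inner x) \<le> norm x * 1" using ninner by simp
  qed
  define T where "T = Blinfun inner"
  have T_apply: "blinfun_apply (blinfun_apply T x) y = G (ptensor x y)" for x y
    unfolding T_def bounded_linear_Blinfun_apply[OF blo] inner_apply ..
  have nT: "norm T \<le> 1"
  proof (rule norm_blinfun_bound)
    fix x show "norm (blinfun_apply T x) \<le> 1 * norm x"
      unfolding T_def bounded_linear_Blinfun_apply[OF blo] using ninner by simp
  qed simp
  define E where "E = {v::('a,'b) ptensor_bidual. blinfun_apply v T = G v}"
  have "subspace E" unfolding subspace_def E_def
    by (auto simp: blinfun.add_left blinfun.scaleR_left Gadd Gsc linear_0[OF G(1)])
  moreover have "{ptensor x y | x y. True} \<subseteq> E" unfolding E_def using T_apply by auto
  ultimately have "span {ptensor x y | x y. True} \<subseteq> E" using span_minimal by blast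
  moreover have "closed E" unfolding E_def
    by (rule closed_Collect_eq) (auto intro!: continuous_intros linear_continuous_on[OF ab(2)])
  ultimately have "ptensor_space \<subseteq> E" unfolding ptensor_space_def by (rule closure_minimal)
  then show ?thesis using nT T_apply unfolding E_def by blast
qed

lemma elem_finite:
  fixes A :: "('a::real_normed_vector,'b::real_normed_vector) ptensor_bidual set"
  assumes oct: "octahedral_on (ptensor_space :: ('a,'b) ptensor_bidual set)"
    and A: "finite A" "A \<subseteq> ptensor_space"
    and N: "finite N" "N \<subseteq> span A" "\<And>g. g \<in> N \<Longrightarrow> norm g \<le> R"
    and \<epsilon>: "\<epsilon> > 0" and R: "R \<ge> 0"
  shows "\<exists>(a::'a) (b::'b). norm a \<le> 1 \<and> norm b \<le> 1 \<and> (\<forall>g\<in>N. (1-\<epsilon>)*(norm g + 1) \<le> norm (g + ptensor a b))"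
proof (cases "N = {}")
  case True then show ?thesis by (intro exI[of _ 0]) auto
next
  case False
  define k where "k = real (card N)"
  have k: "k > 0" using False N(1) k_def by (simp add: card_gt_0_iff)
  define \<epsilon>1 where "\<epsilon>1 = \<epsilon> / (2*k*(R+1))"
  define \<eta> where "\<eta> = \<epsilon> / (2*(k+2))"
  have \<epsilon>1: "\<epsilon>1 > 0" using \<epsilon> k R by (simp add: \<epsilon>1_def)
  have \<eta>: "\<eta> > 0" using \<epsilon> k by (simp add: \<eta>_def)
  obtain w where w: "w \<in> ptensor_space" "norm w = 1"
    "\<forall>f\<in>span A. \<forall>t::real. (1 - \<epsilon>1) * (norm f + \<bar>t\<bar>) \<le> norm (f + t *\<^sub>R w)"
    using oct A \<epsilon>1 unfolding octahedral_on_def by blast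
  have hw: "(1-\<epsilon>1)*(norm g + 1) \<le> norm (g + w)" if gN: "g \<in> N" for g
  proof -
    have "g \<in> span A" using N(2) gN by blast
    then show ?thesis using w(3) by (metis abs_one scaleR_one)
  qed
  have "\<forall>g. \<exists>T. norm T \<le> 1 \<and> norm (g + w) - \<eta> \<le> blinfun_apply (g + w) T"
    using near_fun[OF \<eta>] by blast
  from choice[OF this] obtain Tf where Tf0: "\<forall>g. norm (Tf g) \<le> 1 \<and> norm (g + w) - \<eta> \<le> blinfun_apply (g + w) (Tf g)"
    by blast
  have Tf: "\<And>g. norm (Tf g) \<le> 1" "\<And>g. norm (g + w) - \<eta> \<le> blinfun_apply (g + w) (Tf g)" using Tf0 by auto
  define S where "S = (\<Sum>g\<in>N. Tf g)"
  obtain a where a: "norm a \<le> 1" "norm S - \<eta> \<le> norm (blinfun_apply S a)" using near_norm[OF \<eta>] by blast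
  obtain b where b: "norm b \<le> 1" "norm (blinfun_apply S a) - \<eta> \<le> blinfun_apply (blinfun_apply S a) b"
    using near_fun[OF \<eta>] by blast
  define e where "e = ptensor a b"
  have ne: "norm e \<le> 1" unfolding e_def
    using order_trans[OF norm_ptensor[of a b] mult_le_one[OF a(1) norm_ge_zero b(1)]] .
  have "blinfun_apply w S \<le> norm w * norm S" using norm_blinfun[of w S] by simp
  hence wS: "blinfun_apply w S \<le> blinfun_apply (blinfun_apply S a) b + 2*\<eta>" using w(2) a(2) b(2) by simp
  have Sab: "blinfun_apply (blinfun_apply S a) b = (\<Sum>g\<in>N. blinfun_apply e (Tf g))"
    unfolding S_def e_def by (simp add: blinfun.sum_left)
  have wS': "blinfun_apply w S = (\<Sum>g\<in>N. blinfun_apply w (Tf g))"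
    unfolding S_def by (simp add: blinfun.sum_right)
  have le1: "blinfun_apply (g + e) (Tf g) \<le> norm (g + e)" for g
  proof -
    have "blinfun_apply (g + e) (Tf g) \<le> norm (g + e) * norm (Tf g)" using norm_blinfun[of "g+e" "Tf g"] by simp
    also have "\<dots> \<le> norm (g + e) * 1" by (rule mult_left_mono[OF Tf(1)]) simp
    finally show ?thesis by simp
  qed
  have c1: "(\<Sum>g\<in>N. norm (g + w) - \<eta>) \<le> (\<Sum>g\<in>N. blinfun_apply (g + w) (Tf g))"
    by (rule sum_mono) (rule Tf(2))
  have c2: "(\<Sum>g\<in>N. blinfun_apply (g + w) (Tf g)) = (\<Sum>g\<in>N. blinfun_apply g (Tf g)) + blinfun_apply w S"
    unfolding wS' by (simp add: blinfun.add_left sum.distrib)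
  have c3: "(\<Sum>g\<in>N. blinfun_apply g (Tf g)) + (\<Sum>g\<in>N. blinfun_apply e (Tf g)) = (\<Sum>g\<in>N. blinfun_apply (g + e) (Tf g))"
    by (simp add: blinfun.add_left sum.distrib)
  have c4: "(\<Sum>g\<in>N. blinfun_apply (g + e) (Tf g)) \<le> (\<Sum>g\<in>N. norm (g + e))" by (rule sum_mono) (rule le1)
  have key: "(\<Sum>g\<in>N. norm (g + w) - \<eta>) \<le> (\<Sum>g\<in>N. norm (g + e)) + 2*\<eta>"
    using c1 c2 c3 c4 wS Sab by linarith
  have sumN: "(\<Sum>g\<in>N. norm g + 1) \<le> k * (R + 1)"
    using sum_bounded_above[of N "\<lambda>g. norm g + 1" "R+1"] N(3) k_def by force
  have "(1-\<epsilon>)*(norm g0 + 1) \<le> norm (g0 + e)" if g0: "g0 \<in> N" for g0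
  proof -
    define N' where "N' = N - {g0}"
    define \<Sigma>1 where "\<Sigma>1 = (\<Sum>g\<in>N'. norm (g + e))"
    define \<Sigma>2 where "\<Sigma>2 = (\<Sum>g\<in>N'. norm g + 1)"
    have s1: "\<Sigma>1 \<le> \<Sigma>2" unfolding \<Sigma>1_def \<Sigma>2_def
    proof (rule sum_mono)
      fix g show "norm (g + e) \<le> norm g + 1" using norm_triangle_ineq[of g e] ne by linarith
    qed
    have e1: "(\<Sum>g\<in>N. norm (g + e)) = norm (g0 + e) + \<Sigma>1"
      unfolding \<Sigma>1_def N'_def using sum.remove[OF N(1) g0] by simp
    have e2: "(\<Sum>g\<in>N. norm g + 1) = (norm g0 + 1) + \<Sigma>2"
      unfolding \<Sigma>2_def N'_def using sum.remove[OF N(1) g0] by simp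
    have "(\<Sum>g\<in>N. (1-\<epsilon>1)*(norm g + 1) - \<eta>) \<le> (\<Sum>g\<in>N. norm (g + w) - \<eta>)"
      by (rule sum_mono) (use hw in simp)
    also have "(\<Sum>g\<in>N. (1-\<epsilon>1)*(norm g + 1) - \<eta>) = (1-\<epsilon>1)*(\<Sum>g\<in>N. norm g + 1) - k*\<eta>"
      by (simp add: sum_subtractf sum_distrib_left k_def)
    finally have "(1-\<epsilon>1)*(\<Sum>g\<in>N. norm g + 1) - k*\<eta> \<le> norm (g0 + e) + \<Sigma>1 + 2*\<eta>" using key e1 by simp
    hence "(\<Sum>g\<in>N. norm g + 1) - \<epsilon>1 * (\<Sum>g\<in>N. norm g + 1) - (k+2)*\<eta> \<le> norm (g0 + e) + \<Sigma>2"
      using s1 by (simp add: algebra_simps)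
    moreover have "\<epsilon>1 * (\<Sum>g\<in>N. norm g + 1) \<le> \<epsilon>/2"
    proof -
      have "\<epsilon>1 * (\<Sum>g\<in>N. norm g + 1) \<le> \<epsilon>1 * (k*(R+1))" using sumN \<epsilon>1 by (simp add: mult_left_mono)
      also have "\<dots> = \<epsilon>/2"
      proof -
        have pos: "k*(R+1) \<noteq> 0" using k R by simp
        have "\<epsilon>1 * (k*(R+1)) = (\<epsilon> * (k*(R+1))) / (2 * (k*(R+1)))" unfolding \<epsilon>1_def by (simp add: mult.assoc)
        also have "\<dots> = \<epsilon>/2" using pos by simp
        finally show ?thesis .
      qed
      finally show ?thesis .
    qed
    moreover have "(k+2)*\<eta> = \<epsilon>/2" unfolding \<eta>_def using k by (simp add: field_simps)
    ultimately have "norm g0 + 1 - \<epsilon> \<le> norm (g0 + e)" using e2 by simp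
    moreover have "(1-\<epsilon>)*(norm g0 + 1) \<le> norm g0 + 1 - \<epsilon>"
      using \<epsilon> by (simp add: algebra_simps)
    ultimately show ?thesis by simp
  qed
  then show ?thesis using a(1) b(1) e_def by blast
qed


lemma elem_oct:
  fixes A :: "('a::real_normed_vector,'b::real_normed_vector) ptensor_bidual set"
  assumes oct: "octahedral_on (ptensor_space :: ('a,'b) ptensor_bidual set)"
    and A: "finite A" "A \<subseteq> ptensor_space" and \<epsilon>: "\<epsilon> > 0"
  shows "\<exists>(a::'a) (b::'b). norm a \<le> 1 \<and> norm b \<le> 1 \<and>
           (\<forall>f\<in>span A. \<forall>t. (1-\<epsilon>)*(norm f + \<bar>t\<bar>) \<le> norm (f + t *\<^sub>R ptensor a b))"
proof -
  define \<epsilon>' where "\<epsilon>' = min \<epsilon> 1"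
  have e': "\<epsilon>' > 0" "\<epsilon>' \<le> 1" "\<epsilon>' \<le> \<epsilon>" using \<epsilon> by (auto simp: \<epsilon>'_def)
  define R where "R = 2/\<epsilon>'"
  have R: "R \<ge> 0" "\<epsilon>' * R = 2" using e' by (auto simp: R_def)
  define \<rho> where "\<rho> = \<epsilon>'/4"
  have \<rho>: "\<rho> > 0" using e' by (simp add: \<rho>_def)
  define K where "K = span A \<inter> cball 0 R"
  have cK: "compact K" unfolding K_def using compact_span_cball[OF A(1)] .
  obtain N where N: "finite N" "N \<subseteq> K" "K \<subseteq> (\<Union>g\<in>N. ball g \<rho>)"
    using seq_compact_imp_totally_bounded[OF compact_imp_seq_compact[OF cK], rule_format, OF \<rho>] by (elim exE conjE) blast
  have N': "N \<subseteq> span A" "\<And>g. g \<in> N \<Longrightarrow> norm g \<le> R" using N(2) unfolding K_def by auto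
  obtain a b where ab: "norm (a::'a) \<le> 1" "norm (b::'b) \<le> 1"
    "\<forall>g\<in>N. (1-\<epsilon>'/2)*(norm g + 1) \<le> norm (g + ptensor a b)"
  proof -
    have "\<epsilon>'/2 > 0" using e' by simp
    have "\<exists>(a::'a) (b::'b). norm a \<le> 1 \<and> norm b \<le> 1 \<and> (\<forall>g\<in>N. (1-\<epsilon>'/2)*(norm g + 1) \<le> norm (g + ptensor a b))"
      by (rule elem_finite[OF oct A N(1) N'(1), where R=R]) (use N'(2) \<open>\<epsilon>'/2 > 0\<close> R(1) in auto)
    then show ?thesis by (elim exE conjE) (rule that)
  qed
  define e where "e = ptensor a b"
  have ne: "norm e \<le> 1" unfolding e_def
    using order_trans[OF norm_ptensor[of a b] mult_le_one[OF ab(1) norm_ge_zero ab(2)]] .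
  have H: "(1-\<epsilon>')*(norm f + 1) \<le> norm (f + e)" if f: "f \<in> span A" for f
  proof (cases "norm f \<le> R")
    case False
    have "\<epsilon>' * R < \<epsilon>' * norm f" using False e' by simp
    hence "2 < \<epsilon>' * norm f" using R by simp
    moreover have "norm f - 1 \<le> norm (f + e)"
    proof -
      have "norm f = norm ((f + e) - e)" by simp
      also have "\<dots> \<le> norm (f + e) + norm e" by (rule norm_triangle_ineq4)
      finally show ?thesis using ne by simp
    qed
    moreover have "(1-\<epsilon>')*(norm f + 1) = norm f + 1 - \<epsilon>' * norm f - \<epsilon>'" by (simp add: algebra_simps)
    ultimately show ?thesis using e'(1) by linarith
  next
    case True
    then have "f \<in> K" unfolding K_def using f by simp
    then obtain g where g: "g \<in> N" "dist g f < \<rho>" using N(3) by auto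
    have d: "norm (g - f) < \<rho>" using g(2) by (simp add: dist_norm)
    have t1: "norm (g + e) \<le> norm (f + e) + norm (g - f)"
      using norm_triangle_ineq[of "f + e" "g - f"] by (simp add: algebra_simps)
    have t2: "norm f - \<rho> \<le> norm g" using norm_triangle_ineq2[of f g] d by (simp add: norm_minus_commute)
    define sf where "sf = norm f + 1"
    have c: "0 \<le> 1 - \<epsilon>'/2" using e' by simp
    have m1: "(1-\<epsilon>'/2)*(sf - \<rho>) \<le> (1-\<epsilon>'/2)*(norm g + 1)"
      by (rule mult_left_mono[OF _ c]) (use t2 sf_def in simp)
    have m2: "(1-\<epsilon>'/2)*(sf - \<rho>) = (1-\<epsilon>'/2)* sf - (1-\<epsilon>'/2)*\<rho>" by (rule right_diff_distrib)
    have m3: "(1-\<epsilon>')* sf = (1-\<epsilon>'/2)* sf - (\<epsilon>'/2)* sf"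
    proof -
      have "(1-\<epsilon>'/2) - \<epsilon>'/2 = 1-\<epsilon>'" by simp
      then show ?thesis by (metis left_diff_distrib)
    qed
    have m4: "\<epsilon>'/2 \<le> (\<epsilon>'/2)* sf" using e' sf_def by simp
    have m5: "(1-\<epsilon>'/2)*\<rho> \<le> \<rho>" using e' \<rho> by (simp add: algebra_simps)
    have m6: "2*\<rho> = \<epsilon>'/2" by (simp add: \<rho>_def)
    have m0: "(1-\<epsilon>'/2)*(norm g + 1) \<le> norm (g + e)" using ab(3) g(1) e_def by blast
    have "(1-\<epsilon>')* sf \<le> norm (f + e)" using m0 t1 d m1 m2 m3 m4 m5 m6 by (smt (verit))
    then show ?thesis by (simp add: sf_def)
  qed
  have "(1-\<epsilon>)*(norm f + \<bar>t\<bar>) \<le> norm (f + t *\<^sub>R e)" if f: "f \<in> span A" for f t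
  proof -
    have "(1-\<epsilon>)*(norm f + \<bar>t\<bar>) \<le> (1-\<epsilon>')*(norm f + \<bar>t\<bar>)" using e' by (simp add: mult_right_mono)
    also have "\<dots> \<le> norm (f + t *\<^sub>R e)"
      by (rule oct_scale[OF subspace_span _ e'(2) H f]) (use e' in auto)
    finally show ?thesis .
  qed
  then show ?thesis using ab(1,2) e_def by blast
qed



primrec hseq :: "(nat \<Rightarrow> 'c set \<Rightarrow> 'c) \<Rightarrow> nat \<Rightarrow> 'c list" where
  "hseq C 0 = []"
| "hseq C (Suc n) = hseq C n @ [C n (set (hseq C n))]"

definition sq :: "(nat \<Rightarrow> 'c set \<Rightarrow> 'c) \<Rightarrow> nat \<Rightarrow> 'c" where
  "sq C m = C m (set (hseq C m))"

lemma set_hseq: "set (hseq C n) = sq C ` {..<n}"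
  by (induction n) (auto simp: sq_def lessThan_Suc)

lemma sq_rec: "sq C m = C m (sq C ` {..<m})"
  using set_hseq[of C m] by (simp add: sq_def)

lemma prod_ge_one_minus_sum:
  fixes \<epsilon> :: "nat \<Rightarrow> real"
  assumes "finite S" "\<And>m. 0 \<le> \<epsilon> m" "\<And>m. \<epsilon> m \<le> 1"
  shows "1 - (\<Sum>m\<in>S. \<epsilon> m) \<le> (\<Prod>m\<in>S. (1 - \<epsilon> m))"
  using assms(1)
proof (induction S rule: finite_induct)
  case empty then show ?case by simp
next
  case (insert x S)
  have c: "0 \<le> 1 - \<epsilon> x" using assms(3)[of x] by simp
  have "(1 - \<epsilon> x) * (1 - (\<Sum>m\<in>S. \<epsilon> m)) \<le> (1 - \<epsilon> x) * (\<Prod>m\<in>S. (1 - \<epsilon> m))"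
    by (rule mult_left_mono[OF insert.IH c])
  moreover have "\<epsilon> x * (\<Sum>m\<in>S. \<epsilon> m) \<ge> 0" using assms(2) by (simp add: sum_nonneg)
  ultimately show ?case using insert by (simp add: algebra_simps)
qed

lemma geom_tail: "(\<Sum>m\<in>{n..<n+k}. (1/2::real)^(m+1)) = (1/2)^n - (1/2)^(n+k)"
  by (induction k) (auto simp: power_add)

lemma prod_le_one:
  fixes \<epsilon> :: "nat \<Rightarrow> real"
  assumes "\<And>m. 0 \<le> \<epsilon> m" "\<And>m. \<epsilon> m \<le> 1"
  shows "0 \<le> (\<Prod>m\<in>S. (1 - \<epsilon> m))" "(\<Prod>m\<in>S. (1 - \<epsilon> m)) \<le> 1"
  using assms by (auto intro!: prod_nonneg prod_le_1)

lemma l1_est: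
  fixes w :: "nat \<Rightarrow> 'v::real_normed_vector" and Am :: "nat \<Rightarrow> 'v set" and \<epsilon> :: "nat \<Rightarrow> real"
  assumes mono: "\<And>m. Am m \<subseteq> Am (Suc m)" and wA: "\<And>m. w m \<in> Am (Suc m)"
    and oc: "\<And>m f t. f \<in> span (Am m) \<Longrightarrow> (1 - \<epsilon> m)*(norm f + \<bar>t\<bar>) \<le> norm (f + t *\<^sub>R w m)"
    and eps: "\<And>m. 0 \<le> \<epsilon> m" "\<And>m. \<epsilon> m \<le> 1"
    and f: "f \<in> span (Am n)"
  shows "(\<Prod>m\<in>{n..<n+k}. (1-\<epsilon> m)) * (norm f + (\<Sum>m\<in>{n..<n+k}. \<bar>t m\<bar>))
          \<le> norm (f + (\<Sum>m\<in>{n..<n+k}. t m *\<^sub>R w m))"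
proof (induction k)
  case 0 then show ?case by simp
next
  case (Suc k)
  define P where "P = (\<Prod>m\<in>{n..<n+k}. (1-\<epsilon> m))"
  define \<Sigma> where "\<Sigma> = (\<Sum>m\<in>{n..<n+k}. \<bar>t m\<bar>)"
  define g where "g = f + (\<Sum>m\<in>{n..<n+k}. t m *\<^sub>R w m)"
  have monoA: "Am i \<subseteq> Am j" if "i \<le> j" for i j using lift_Suc_mono_le[of Am, OF mono that] .
  have "g \<in> span (Am (n+k))"
  proof -
    have "f \<in> span (Am (n+k))" using f span_mono[OF monoA[of n "n+k"]] by auto
    moreover have "(\<Sum>m\<in>{n..<n+k}. t m *\<^sub>R w m) \<in> span (Am (n+k))"
    proof (rule span_sum)
      fix m assume "m \<in> {n..<n+k}"
      then have "w m \<in> Am (n+k)" using wA[of m] monoA[of "Suc m" "n+k"] by auto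
      then show "t m *\<^sub>R w m \<in> span (Am (n+k))" by (simp add: span_base span_scale)
    qed
    ultimately show ?thesis unfolding g_def by (rule span_add)
  qed
  from oc[OF this, of "t (n+k)"] have A: "(1 - \<epsilon> (n+k))*(norm g + \<bar>t (n+k)\<bar>) \<le> norm (g + t (n+k) *\<^sub>R w (n+k))" .
  have IH: "P * (norm f + \<Sigma>) \<le> norm g" using Suc.IH unfolding P_def \<Sigma>_def g_def .
  have P01: "0 \<le> P" "P \<le> 1" unfolding P_def using prod_le_one[OF eps] by auto
  have c: "0 \<le> 1 - \<epsilon> (n+k)" using eps(2)[of "n+k"] by simp
  have "P * (norm f + \<Sigma> + \<bar>t (n+k)\<bar>) \<le> norm g + \<bar>t (n+k)\<bar>"
    using IH P01 mult_left_le_one_le[of "\<bar>t (n+k)\<bar>" P] by (simp add: algebra_simps)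
  hence "(1 - \<epsilon> (n+k)) * (P * (norm f + \<Sigma> + \<bar>t (n+k)\<bar>)) \<le> (1 - \<epsilon> (n+k))*(norm g + \<bar>t (n+k)\<bar>)"
    by (rule mult_left_mono[OF _ c])
  also note A
  finally have B: "(1 - \<epsilon> (n+k)) * (P * (norm f + \<Sigma> + \<bar>t (n+k)\<bar>)) \<le> norm (g + t (n+k) *\<^sub>R w (n+k))" .
  have e1: "(\<Prod>m\<in>{n..<n+Suc k}. (1-\<epsilon> m)) = P * (1 - \<epsilon> (n+k))" unfolding P_def by simp
  have e2: "(\<Sum>m\<in>{n..<n+Suc k}. \<bar>t m\<bar>) = \<Sigma> + \<bar>t (n+k)\<bar>" unfolding \<Sigma>_def by simp
  have e3: "f + (\<Sum>m\<in>{n..<n+Suc k}. t m *\<^sub>R w m) = g + t (n+k) *\<^sub>R w (n+k)" unfolding g_def by (simp add: algebra_simps)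
  show ?case unfolding e1 e2 e3 using B by (simp add: algebra_simps)
qed

lemma subspace_closure_nv:
  fixes S :: "'v::real_normed_vector set"
  assumes "subspace S"
  shows "subspace (closure S)"
  unfolding subspace_def
proof (intro conjI ballI allI)
  show "0 \<in> closure S" using subspace_0[OF assms] closure_subset by blast
next
  fix x y assume x: "x \<in> closure S" and y: "y \<in> closure S"
  show "x + y \<in> closure S" unfolding closure_approachable
  proof (intro allI impI)
    fix e :: real assume e: "e > 0"
    obtain x' where x': "x' \<in> S" "dist x' x < e/2" using x e unfolding closure_approachable by (meson half_gt_zero)
    obtain y' where y': "y' \<in> S" "dist y' y < e/2" using y e unfolding closure_approachable by (meson half_gt_zero)
    have "dist (x' + y') (x + y) \<le> dist x' x + dist y' y" by (rule dist_triangle_add)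
    then show "\<exists>z\<in>S. dist z (x + y) < e" using x' y' subspace_add[OF assms] by (intro bexI[of _ "x'+y'"]) auto
  qed
next
  fix c x assume x: "x \<in> closure S"
  show "c *\<^sub>R x \<in> closure S"
  proof (cases "c = 0")
    case True then show ?thesis using subspace_0[OF assms] closure_subset by auto
  next
    case False
    show ?thesis unfolding closure_approachable
    proof (intro allI impI)
      fix e :: real assume e: "e > 0"
      have "e / \<bar>c\<bar> > 0" using e False by simp
      then obtain x' where x': "x' \<in> S" "dist x' x < e / \<bar>c\<bar>" using x unfolding closure_approachable by blast
      have "dist (c *\<^sub>R x') (c *\<^sub>R x) = \<bar>c\<bar> * dist x' x"
        by (simp add: dist_norm scaleR_diff_right[symmetric])
      also have "\<dots> < e" using x' False by (simp add: field_simps)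
      finally show "\<exists>z\<in>S. dist z (c *\<^sub>R x) < e" using x' subspace_scale[OF assms] by blast
    qed
  qed
qed

lemma norming_functional:
  fixes x :: "'v::real_normed_vector"
  shows "\<exists>g :: 'v \<Rightarrow>\<^sub>L real. norm g \<le> 1 \<and> blinfun_apply g x = norm x"
proof -
  have K: "r \<le> norm s" if "(s,r) \<in> cone_gen {(x, norm x)}" for s r
  proof -
    have "\<exists>l\<ge>0. s = l *\<^sub>R x \<and> r = l * norm x" using that
    proof (induction rule: cone_gen.induct[split_format (complete)])
      case cg0 then show ?case by (intro exI[of _ 0]) auto
    next
      case (cgP q) then show ?case by (intro exI[of _ 1]) auto
    next
      case (cgadd s1 r1 s2 r2)
      then obtain l1 l2 where "l1 \<ge> 0" "s1 = l1 *\<^sub>R x" "r1 = l1 * norm x" "l2 \<ge> 0" "s2 = l2 *\<^sub>R x" "r2 = l2 * norm x" by blast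
      then show ?case by (intro exI[of _ "l1+l2"]) (auto simp: algebra_simps)
    next
      case (cgscale s r l)
      then obtain l1 where "l1 \<ge> 0" "s = l1 *\<^sub>R x" "r = l1 * norm x" by blast
      then show ?case using cgscale.hyps(2) by (intro exI[of _ "l*l1"]) auto
    qed
    then show ?thesis by auto
  qed
  obtain F where F: "linear F" "\<forall>x. F x \<le> norm x" "\<forall>v c. (v,c) \<in> {(x, norm x)} \<longrightarrow> c \<le> F v"
    using mazur_orlicz[of norm "{(x, norm x)}", OF norm_triangle_ineq _ K] by auto
  have F2: "\<And>v. F v \<le> norm v" using F(2) by blast
  note lb = linear_bounded_by_norm[OF F(1) F2]
  have Fap: "blinfun_apply (Blinfun F) = F" using bounded_linear_Blinfun_apply[OF lb(2)] .
  have "norm (Blinfun F) \<le> 1"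
    by (rule norm_blinfun_bound) (use lb(1) Fap in auto)
  moreover have "F x = norm x" using F(2) F(3) by (meson antisym insertI1)
  ultimately show ?thesis using Fap by auto
qed


lemma sum_if_less_ext:
  fixes f :: "nat \<Rightarrow> 'x::comm_monoid_add"
  assumes "ki \<le> k"
  shows "(\<Sum>j\<in>{N..<N+k}. (if j < N+ki then f j else 0)) = (\<Sum>j\<in>{N..<N+ki}. f j)"
proof -
  have "(\<Sum>j\<in>{N..<N+k}. (if j < N+ki then f j else 0)) = (\<Sum>j\<in>{j\<in>{N..<N+k}. j < N+ki}. f j)"
    using sum.inter_filter[of "{N..<N+k}" f "\<lambda>j. j < N+ki", symmetric] by simp
  also have "{j\<in>{N..<N+k}. j < N+ki} = {N..<N+ki}" using assms by auto
  finally show ?thesis .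
qed



theorem mainTheorem3:
  assumes sepX: "separable_space (euclidean :: 'a::banach topology)"
    and sepY: "separable_space (euclidean :: 'b::banach topology)"
    and fdY: "\<exists>B::'b set. finite B \<and> span B = UNIV"
    and oct: "octahedral_on (ptensor_space :: ('a,'b) ptensor_bidual set)"
  shows "\<exists>u :: ('a \<Rightarrow>\<^sub>L real) \<Rightarrow>\<^sub>L real.
           norm u = 1 \<and>
           (\<forall>x::'a. norm (bidual_emb x + u) = 1 + norm x) \<and>
           (\<exists>y::'b. norm y = 1 \<and>
              (\<forall>z \<in> (ptensor_space :: ('a,'b) ptensor_bidual set).
                  norm (z + bidual_tensor u y) = 1 + norm z))"
proof -
  define Z where "Z = (ptensor_space :: ('a,'b) ptensor_bidual set)"
  define PT where "PT = {ptensor x y | (x::'a) (y::'b). True}"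
  have spanPTZ: "span PT \<subseteq> Z" unfolding Z_def ptensor_space_def PT_def using closure_subset by blast
  have PTZ: "PT \<subseteq> Z" using spanPTZ span_superset by blast
  obtain CX where CX: "countable CX" "closure CX = (UNIV::'a set)"
    using sepX unfolding separable_space_def by auto
  obtain CY where CY: "countable CY" "closure CY = (UNIV::'b set)"
    using sepY unfolding separable_space_def by auto
  define D where "D = (\<lambda>(x,y). ptensor x y) ` (CX \<times> CY)"
  have Dc: "countable D" unfolding D_def using CX(1) CY(1) by auto
  have CXne: "CX \<noteq> {}" using CX(2) by auto
  have CYne: "CY \<noteq> {}" using CY(2) by auto
  have Dne: "D \<noteq> {}" unfolding D_def using CXne CYne by auto
  have DPT: "D \<subseteq> PT" unfolding D_def PT_def by auto
  have Zcl: "Z \<subseteq> closure (span D)"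
  proof -
    have "PT \<subseteq> closure (span D)"
    proof
      fix v assume "v \<in> PT"
      then obtain x y where v: "v = ptensor x y" unfolding PT_def by auto
      show "v \<in> closure (span D)" unfolding closure_approachable v
      proof (intro allI impI)
        fix e :: real assume e: "e > 0"
        define d1 where "d1 = min 1 (e / (2*(norm y + 1)))"
        have p1: "2*(norm y + 1) > 0" using norm_ge_zero[of y] by (smt (verit))
        have d1: "d1 > 0" using e p1 unfolding d1_def by (simp del: distrib_left_numeral)
        obtain x' where x': "x' \<in> CX" "dist x' x < d1"
        proof -
          have "x \<in> closure CX" by (simp add: CX(2))
          then show ?thesis using d1 that unfolding closure_approachable by blast
        qed
        define d2 where "d2 = e / (2*(norm x + 2))"
        have p2: "2*(norm x + 2) > 0" using norm_ge_zero[of x] by (smt (verit))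
        have d2: "d2 > 0" using e p2 unfolding d2_def by (simp del: distrib_left_numeral)
        obtain y' where y': "y' \<in> CY" "dist y' y < d2"
        proof -
          have "y \<in> closure CY" by (simp add: CY(2))
          then show ?thesis using d2 that unfolding closure_approachable by blast
        qed
        have nx: "norm (x - x') < d1" using x'(2) by (simp add: dist_norm norm_minus_commute)
        have ny: "norm (y - y') < d2" using y'(2) by (simp add: dist_norm norm_minus_commute)
        have nx': "norm x' \<le> norm x + 1" using nx d1_def norm_triangle_ineq3[of x x']
          by (smt (verit) norm_minus_commute norm_triangle_ineq2)
        have t1: "norm (x - x') * norm y \<le> d1 * norm y" using nx by (simp add: mult_right_mono)
        also have "\<dots> \<le> (e / (2*(norm y + 1))) * (norm y + 1)"
          using d1 by (intro mult_mono) (auto simp: d1_def)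
        also have "\<dots> = e/2" using p1 by (simp del: distrib_left_numeral)
        finally have t1: "norm (x - x') * norm y \<le> e/2" .
        have "norm x' * norm (y - y') \<le> (norm x + 1) * d2" using nx' ny by (intro mult_mono) auto
        also have "\<dots> < (norm x + 2) * d2" using d2 by simp
        also have "\<dots> = e/2" unfolding d2_def using p2 by (simp del: distrib_left_numeral)
        finally have t2: "norm x' * norm (y - y') < e/2" .
        have "dist (ptensor x' y') (ptensor x y) = norm (ptensor x y - ptensor x' y')"
          by (simp add: dist_norm norm_minus_commute)
        also have "\<dots> \<le> norm (x - x') * norm y + norm x' * norm (y - y')" by (rule ptensor_cont)
        also have "\<dots> < e" using t1 t2 by simp
        finally have "dist (ptensor x' y') (ptensor x y) < e" .
        moreover have "ptensor x' y' \<in> span D" unfolding D_def using x'(1) y'(1) by (intro span_base) auto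
        ultimately show "\<exists>z\<in>span D. dist z (ptensor x y) < e" by blast
      qed
    qed
    moreover have "subspace (closure (span D))" by (rule subspace_closure_nv) simp
    ultimately have "span PT \<subseteq> closure (span D)" using span_minimal by blast
    then show ?thesis unfolding Z_def ptensor_space_def PT_def[symmetric]
      by (rule closure_minimal) simp
  qed
  define d where "d = from_nat_into D"
  have drange: "range d = D" unfolding d_def using Dne Dc by simp
  define \<epsilon> where "\<epsilon> m = (1/2::real)^(m+1)" for m
  have eps1: "\<epsilon> m \<le> 1" for m unfolding \<epsilon>_def by (rule power_le_one) auto
  have eps0: "\<epsilon> m > 0" for m unfolding \<epsilon>_def by simp
  have eps: "0 \<le> \<epsilon> m" "\<epsilon> m \<le> 1" "\<epsilon> m > 0" for m using eps0[of m] eps1[of m] by auto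
  define Prop where "Prop A e ab \<longleftrightarrow> norm (fst ab) \<le> 1 \<and> norm (snd ab) \<le> 1 \<and>
     (\<forall>f\<in>span A. \<forall>t. (1-e)*(norm f + \<bar>t\<bar>) \<le> norm (f + t *\<^sub>R ptensor (fst ab) (snd ab)))"
    for A :: "('a,'b) ptensor_bidual set" and e :: real and ab :: "'a \<times> 'b"
  have Ch: "\<exists>ab. Prop A e ab" if "finite A" "A \<subseteq> PT" "e > 0" for A e
  proof -
    have "A \<subseteq> ptensor_space" using that(2) PTZ Z_def by auto
    from elem_oct[OF oct that(1) this that(3)] obtain a b where
      "norm (a::'a) \<le> 1" "norm (b::'b) \<le> 1"
      "\<forall>f\<in>span A. \<forall>t. (1-e)*(norm f + \<bar>t\<bar>) \<le> norm (f + t *\<^sub>R ptensor a b)" by blast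
    then show ?thesis unfolding Prop_def by (intro exI[of _ "(a,b)"]) auto
  qed
  define Chf where "Chf A e = (SOME ab. Prop A e ab)" for A e
  define C where "C m P = Chf (d ` {..m} \<union> (\<lambda>ab. ptensor (fst ab) (snd ab)) ` P) (\<epsilon> m)" for m P
  define p where "p = sq C"
  define a where "a m = fst (p m)" for m
  define b where "b m = snd (p m)" for m
  define w where "w m = ptensor (a m) (b m)" for m
  define Am where "Am m = d ` {..m} \<union> w ` {..<m}" for m
  have pm: "p m = Chf (Am m) (\<epsilon> m)" for m
  proof -
    have "(\<lambda>ab. ptensor (fst ab) (snd ab)) ` (p ` {..<m}) = w ` {..<m}"
      unfolding w_def a_def b_def by (simp add: image_image)
    then show ?thesis unfolding p_def sq_rec[of C m] by (simp add: C_def Am_def p_def[symmetric])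
  qed
  have dPT: "d j \<in> PT" for j using DPT drange by auto
  have wPT: "w j \<in> PT" for j unfolding w_def PT_def by auto
  have AmPT: "Am m \<subseteq> PT" for m unfolding Am_def using dPT wPT by auto
  have Amfin: "finite (Am m)" for m unfolding Am_def by simp
  have hprop: "Prop (Am m) (\<epsilon> m) (p m)" for m
    unfolding pm Chf_def using someI_ex[OF Ch[OF Amfin AmPT eps(3)]] .
  have na: "norm (a m) \<le> 1" and nb: "norm (b m) \<le> 1" for m using hprop[of m] unfolding Prop_def a_def b_def by auto
  have oc: "(1 - \<epsilon> m)*(norm f + \<bar>t\<bar>) \<le> norm (f + t *\<^sub>R w m)" if "f \<in> span (Am m)" for m f t
    using hprop[of m] that unfolding Prop_def w_def a_def b_def by blast
  have Ammono: "Am m \<subseteq> Am (Suc m)" for m unfolding Am_def by (auto simp: lessThan_Suc)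
  have Ammono': "Am i \<subseteq> Am j" if "i \<le> j" for i j using lift_Suc_mono_le[of Am, OF Ammono that] .
  have wA: "w m \<in> Am (Suc m)" for m unfolding Am_def by auto
  have dA: "d m \<in> Am m" for m unfolding Am_def by auto
  obtain B :: "'b set" where B: "finite B" "span B = UNIV" using fdY by blast
  have cb: "compact (cball (0::'b) 1)" using compact_span_cball[OF B(1), of 1] B(2) by simp
  have "\<forall>m. b m \<in> cball 0 1" using nb by auto
  then obtain y r where yr: "y \<in> cball 0 1" "strict_mono r" "(b \<circ> r) \<longlonglongrightarrow> y"
    using compact_imp_seq_compact[OF cb] unfolding seq_compact_def by metis
  have ny: "norm y \<le> 1" using yr(1) by simp
  define Pu where "Pu = {(g::'a \<Rightarrow>\<^sub>L real, c). \<exists>K. \<forall>k\<ge>K. c \<le> blinfun_apply g (a (r k))}"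
  have Ku: "c \<le> norm g" if "(g, c) \<in> cone_gen Pu" for g c
  proof -
    have "\<exists>K. \<forall>k\<ge>K. c \<le> blinfun_apply g (a (r k))" using that
    proof (induction rule: cone_gen.induct[split_format (complete)])
      case cg0 then show ?case by simp
    next
      case (cgP g c) then show ?case unfolding Pu_def by simp
    next
      case (cgadd s1 r1 s2 r2)
      then obtain K1 K2 where "\<forall>k\<ge>K1. r1 \<le> blinfun_apply s1 (a (r k))" "\<forall>k\<ge>K2. r2 \<le> blinfun_apply s2 (a (r k))"
        by blast
      then show ?case by (intro exI[of _ "max K1 K2"]) (auto simp: blinfun.add_left intro: add_mono)
    next
      case (cgscale s1 r1 l)
      then obtain K where "\<forall>k\<ge>K. r1 \<le> blinfun_apply s1 (a (r k))" by blast
      then show ?case using cgscale.hyps(2)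
        by (intro exI[of _ K]) (auto simp: blinfun.scaleR_left intro: mult_left_mono)
    qed
    then obtain K where K: "\<forall>k\<ge>K. c \<le> blinfun_apply g (a (r k))" by blast
    have "c \<le> blinfun_apply g (a (r K))" using K by simp
    also have "\<dots> \<le> norm g * norm (a (r K))" using norm_blinfun[of g "a (r K)"] by simp
    also have "\<dots> \<le> norm g" using na[of "r K"] by (simp add: mult_left_le)
    finally show ?thesis .
  qed
  obtain U where U: "linear U" "\<forall>g. U g \<le> norm g" "\<forall>g c. (g,c) \<in> Pu \<longrightarrow> c \<le> U g"
    using mazur_orlicz[of norm Pu, OF norm_triangle_ineq _ Ku] by auto
  have U2: "\<And>g. U g \<le> norm g" using U(2) by blast
  note Ub = linear_bounded_by_norm[OF U(1) U2]
  define u where "u = Blinfun U"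
  have uap: "blinfun_apply u = U" unfolding u_def using bounded_linear_Blinfun_apply[OF Ub(2)] .
  have nu: "norm u \<le> 1" by (rule norm_blinfun_bound) (use Ub(1) uap in auto)
  define e0 where "e0 = bidual_tensor u y"
  have ne0: "norm e0 \<le> 1" unfolding e0_def
    using order_trans[OF norm_bt mult_le_one[OF nu norm_ge_zero ny]] .
  have spanAmZ: "span (Am n) \<subseteq> Z" for n using span_mono[OF AmPT[of n]] spanPTZ by blast
  have low: "norm z + 1 \<le> norm (z + e0)" if z: "z \<in> span (Am n)" for z n
  proof (rule field_le_epsilon)
    fix e :: real assume e: "e > 0"
    define \<delta> where "\<delta> = e/3"
    have \<delta>: "\<delta> > 0" using e by (simp add: \<delta>_def)
    define \<eta> where "\<eta> = \<delta> / (norm z + 1)"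
    have nz1: "norm z + 1 > 0" using norm_ge_zero[of z] by (smt (verit))
    have \<eta>: "\<eta> > 0" using \<delta> nz1 by (simp add: \<eta>_def)
    have \<eta>z: "\<eta> * norm z \<le> \<delta>" "\<eta> \<le> \<delta>"
    proof -
      have "\<eta> * (norm z + 1) = \<delta>" using nz1 by (simp add: \<eta>_def)
      moreover have "\<eta> * norm z \<ge> 0" using \<eta> by simp
      ultimately have "\<eta> + \<eta> * norm z = \<delta>" "0 \<le> \<eta> * norm z" by (simp_all add: algebra_simps)
      then show "\<eta> * norm z \<le> \<delta>" "\<eta> \<le> \<delta>" using \<eta> by linarith+
    qed
    obtain N0 where N0: "(1/2::real)^N0 < \<eta>" using real_arch_pow_inv[OF \<eta>, of "1/2"] by auto
    define N where "N = max n N0"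
    have hN: "(1/2::real)^N \<le> \<eta>"
    proof -
      have "(1/2::real)^N \<le> (1/2)^N0" by (rule power_decreasing) (auto simp: N_def)
      then show ?thesis using N0 by linarith
    qed
    have zN: "z \<in> span (Am N)" using z span_mono[OF Ammono'[of n N]] by (auto simp: N_def)
    define PT' where "PT' = {(z, norm z - \<delta>)} \<union> {(w m, 1-\<delta>) | m. N \<le> m}"
    have KT: "c \<le> norm v" if "(v, c) \<in> cone_gen PT'" for v c
    proof -
      have "\<exists>l\<ge>0. \<exists>k t. (\<forall>j. 0 \<le> t j) \<and> v = l *\<^sub>R z + (\<Sum>j\<in>{N..<N+k}. t j *\<^sub>R w j)
              \<and> c = l * (norm z - \<delta>) + (\<Sum>j\<in>{N..<N+k}. t j) * (1-\<delta>)" using that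
      proof (induction rule: cone_gen.induct[split_format (complete)])
        case cg0 show ?case by (rule exI[of _ 0], intro conjI exI[of _ 0] exI[of _ "\<lambda>_. 0"]) (use eps in auto)
      next
        case (cgP v c)
        then consider "v = z" "c = norm z - \<delta>" | m where "N \<le> m" "v = w m" "c = 1 - \<delta>" unfolding PT'_def by blast
        then show ?case
        proof cases
          case 1 show ?thesis by (rule exI[of _ 1], intro conjI exI[of _ 0] exI[of _ "\<lambda>_. 0"]) (use 1 in auto)
        next
          case (2 m)
          define t where "t j = (if j = m then 1 else (0::real))" for j
          have "m \<in> {N..<N + (m - N + 1)}" using 2 by auto
          then have "(\<Sum>j\<in>{N..<N + (m - N + 1)}. t j *\<^sub>R w j) = w m" "(\<Sum>j\<in>{N..<N + (m - N + 1)}. t j) = 1"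
            unfolding t_def by (simp_all add: if_distrib sum.delta cong: if_cong)
          show ?thesis by (rule exI[of _ 0], intro conjI exI[of _ "m - N + 1"] exI[of _ t]) (use 2 \<open>(\<Sum>j\<in>{N..<N + (m - N + 1)}. t j *\<^sub>R w j) = w m\<close> \<open>(\<Sum>j\<in>{N..<N + (m - N + 1)}. t j) = 1\<close> in \<open>auto simp: t_def\<close>)
        qed
      next
        case (cgadd v1 c1 v2 c2)
        then obtain l1 k1 t1 l2 k2 t2 where h: "l1 \<ge> 0" "\<forall>j. 0 \<le> t1 j" "v1 = l1 *\<^sub>R z + (\<Sum>j\<in>{N..<N+k1}. t1 j *\<^sub>R w j)"
          "c1 = l1 * (norm z - \<delta>) + (\<Sum>j\<in>{N..<N+k1}. t1 j) * (1-\<delta>)"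
          "l2 \<ge> 0" "\<forall>j. 0 \<le> t2 j" "v2 = l2 *\<^sub>R z + (\<Sum>j\<in>{N..<N+k2}. t2 j *\<^sub>R w j)"
          "c2 = l2 * (norm z - \<delta>) + (\<Sum>j\<in>{N..<N+k2}. t2 j) * (1-\<delta>)" by blast
        define k where "k = max k1 k2"
        define t where "t j = (if j < N+k1 then t1 j else 0) + (if j < N+k2 then t2 j else 0)" for j
        have s1: "(\<Sum>j\<in>{N..<N+k}. t j *\<^sub>R w j) = (\<Sum>j\<in>{N..<N+k1}. t1 j *\<^sub>R w j) + (\<Sum>j\<in>{N..<N+k2}. t2 j *\<^sub>R w j)"
        proof -
          have "(\<Sum>j\<in>{N..<N+k}. t j *\<^sub>R w j) = (\<Sum>j\<in>{N..<N+k}. (if j < N+k1 then t1 j *\<^sub>R w j else 0)) + (\<Sum>j\<in>{N..<N+k}. (if j < N+k2 then t2 j *\<^sub>R w j else 0))"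
          proof -
            have "t j *\<^sub>R w j = (if j < N+k1 then t1 j *\<^sub>R w j else 0) + (if j < N+k2 then t2 j *\<^sub>R w j else 0)" for j
              unfolding t_def by (simp add: scaleR_add_left)
            then show ?thesis by (simp add: sum.distrib[symmetric])
          qed
          then show ?thesis using sum_if_less_ext[of k1 k N "\<lambda>j. t1 j *\<^sub>R w j"] sum_if_less_ext[of k2 k N "\<lambda>j. t2 j *\<^sub>R w j"] by (simp add: k_def)
        qed
        have s2: "(\<Sum>j\<in>{N..<N+k}. t j) = (\<Sum>j\<in>{N..<N+k1}. t1 j) + (\<Sum>j\<in>{N..<N+k2}. t2 j)"
          unfolding t_def sum.distrib using sum_if_less_ext[of k1 k N t1] sum_if_less_ext[of k2 k N t2] by (simp add: k_def)
        have f1: "\<forall>j. 0 \<le> t j" unfolding t_def using h(2,6) by simp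
        have f2: "v1 + v2 = (l1 + l2) *\<^sub>R z + (\<Sum>j\<in>{N..<N+k}. t j *\<^sub>R w j)"
          using h(3,7) s1 by (simp add: algebra_simps scaleR_add_left)
        have f3: "c1 + c2 = (l1 + l2) * (norm z - \<delta>) + (\<Sum>j\<in>{N..<N+k}. t j) * (1-\<delta>)"
          using h(4,8) s2 by (simp add: algebra_simps)
        show ?case by (rule exI[of _ "l1+l2"], intro conjI exI[of _ k] exI[of _ t]) (use h(1,5) f1 f2 f3 in auto)
      next
        case (cgscale v1 c1 l)
        then obtain l1 k t where h: "l1 \<ge> 0" "\<forall>j. 0 \<le> t j" "v1 = l1 *\<^sub>R z + (\<Sum>j\<in>{N..<N+k}. t j *\<^sub>R w j)"
          "c1 = l1 * (norm z - \<delta>) + (\<Sum>j\<in>{N..<N+k}. t j) * (1-\<delta>)" by blast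
        have f1: "l *\<^sub>R v1 = (l*l1) *\<^sub>R z + (\<Sum>j\<in>{N..<N+k}. (l * t j) *\<^sub>R w j)"
          using h(3) by (simp add: scaleR_add_right scaleR_sum_right)
        have f2: "l * c1 = (l*l1) * (norm z - \<delta>) + (\<Sum>j\<in>{N..<N+k}. l * t j) * (1-\<delta>)"
        proof -
          have r: "c1 = l1 * A + S * B \<Longrightarrow> l * c1 = (l*l1) * A + (l*S) * B" for A B S :: real
            by (simp add: algebra_simps)
          have "(\<Sum>j\<in>{N..<N+k}. l * t j) = l * (\<Sum>j\<in>{N..<N+k}. t j)" by (simp add: sum_distrib_left)
          then show ?thesis using r[OF h(4)] by simp
        qed
        have f3: "\<forall>j. 0 \<le> l * t j" using h(2) cgscale.hyps(2) by simp
        show ?case by (rule exI[of _ "l*l1"], intro conjI exI[of _ k] exI[of _ "\<lambda>j. l * t j"]) (use h(1) cgscale.hyps(2) f1 f2 f3 in auto)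
      qed
      then obtain l k t where h: "l \<ge> 0" "\<forall>j. 0 \<le> t j" "v = l *\<^sub>R z + (\<Sum>j\<in>{N..<N+k}. t j *\<^sub>R w j)"
          "c = l * (norm z - \<delta>) + (\<Sum>j\<in>{N..<N+k}. t j) * (1-\<delta>)" by blast
      define Pr where "Pr = (\<Prod>m\<in>{N..<N+k}. (1-\<epsilon> m))"
      define St where "St = (\<Sum>j\<in>{N..<N+k}. t j)"
      have lz: "l *\<^sub>R z \<in> span (Am N)" using zN by (simp add: span_scale)
      have "Pr * (norm (l *\<^sub>R z) + (\<Sum>j\<in>{N..<N+k}. \<bar>t j\<bar>)) \<le> norm v"
        unfolding Pr_def h(3) by (rule l1_est[OF Ammono wA oc eps(1) eps(2) lz])
      moreover have "norm (l *\<^sub>R z) = l * norm z" using h(1) by simp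
      moreover have "(\<Sum>j\<in>{N..<N+k}. \<bar>t j\<bar>) = St" unfolding St_def using h(2) by simp
      ultimately have A: "Pr * (l * norm z + St) \<le> norm v" by metis
      have "1 - (\<Sum>m\<in>{N..<N+k}. \<epsilon> m) \<le> Pr" unfolding Pr_def by (rule prod_ge_one_minus_sum) (auto simp: eps)
      moreover have "(\<Sum>m\<in>{N..<N+k}. \<epsilon> m) \<le> (1/2)^N" unfolding \<epsilon>_def geom_tail by simp
      ultimately have Pr: "1 - \<eta> \<le> Pr" using hN by simp
      have X: "0 \<le> l * norm z + St" unfolding St_def using h(1,2) by (simp add: sum_nonneg)
      have "(1 - \<eta>) * (l * norm z + St) \<le> Pr * (l * norm z + St)" by (rule mult_right_mono[OF Pr X])
      moreover have "c \<le> (1 - \<eta>) * (l * norm z + St)"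
      proof -
        have "l * (\<eta> * norm z) \<le> l * \<delta>" by (rule mult_left_mono[OF \<eta>z(1) h(1)])
        moreover have "St * \<eta> \<le> St * \<delta>" using \<eta>z(2) St_def h(2) by (simp add: mult_left_mono sum_nonneg)
        ultimately show ?thesis unfolding h(4) St_def[symmetric] by (simp add: algebra_simps)
      qed
      ultimately show ?thesis using A by linarith
    qed
    obtain G where G: "linear G" "\<forall>v. G v \<le> norm v" "\<forall>v c. (v,c) \<in> PT' \<longrightarrow> c \<le> G v"
      using mazur_orlicz[of norm PT', OF norm_triangle_ineq _ KT] by auto
    have G2: "\<And>v. G v \<le> norm v" using G(2) by blast
    obtain T where T: "norm T \<le> 1" "\<forall>x y. blinfun_apply (blinfun_apply T x) y = G (ptensor x y)"
      "\<forall>v\<in>ptensor_space. blinfun_apply v T = G v"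
      using functional_to_T[OF G(1) G2] by blast
    have zZ: "z \<in> Z" using z spanAmZ by blast
    have hz: "norm z - \<delta> \<le> blinfun_apply z T" using T(3) zZ G(3) unfolding Z_def PT'_def by auto
    have hw: "1 - \<delta> \<le> blinfun_apply (blinfun_apply T (a m)) (b m)" if "N \<le> m" for m
    proof -
      have "(w m, 1-\<delta>) \<in> PT'" using that unfolding PT'_def by blast
      then have "1 - \<delta> \<le> G (w m)" using G(3) by blast
      then show ?thesis using T(2) unfolding w_def by simp
    qed
    obtain K1 where K1: "\<forall>k\<ge>K1. norm ((b \<circ> r) k - y) < \<delta>" using LIMSEQ_D[OF yr(3) \<delta>] by blast
    have "\<forall>k\<ge>max K1 N. 1 - 2*\<delta> \<le> blinfun_apply (ycomp T y) (a (r k))"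
    proof (intro allI impI)
      fix k assume k: "max K1 N \<le> k"
      define m where "m = r k"
      have mN: "N \<le> m" using seq_suble[OF yr(2), of k] k by (simp add: m_def)
      have hby: "norm (y - b m) < \<delta>" using K1 k by (simp add: m_def norm_minus_commute)
      have "blinfun_apply (blinfun_apply T (a m)) y = blinfun_apply (blinfun_apply T (a m)) (b m) + blinfun_apply (blinfun_apply T (a m)) (y - b m)"
        by (simp add: blinfun.diff_right)
      moreover have "norm (blinfun_apply (blinfun_apply T (a m)) (y - b m)) \<le> norm (y - b m)"
      proof -
        have "norm (blinfun_apply (blinfun_apply T (a m)) (y - b m)) \<le> norm T * norm (a m) * norm (y - b m)" by (rule ev_bound)
        also have "\<dots> \<le> 1 * 1 * norm (y - b m)" using T(1) na[of m]
          by (intro mult_right_mono mult_mono) auto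
        finally show ?thesis by simp
      qed
      ultimately show "1 - 2*\<delta> \<le> blinfun_apply (ycomp T y) (a (r k))"
        using hw[OF mN] by (simp add: m_def[symmetric]) (smt (verit) hby real_norm_def)
    qed
    then have "(ycomp T y, 1 - 2*\<delta>) \<in> Pu" unfolding Pu_def by blast
    then have he: "1 - 2*\<delta> \<le> blinfun_apply e0 T" using U(3) by (simp add: e0_def uap)
    have "blinfun_apply (z + e0) T \<le> norm (z + e0)"
    proof -
      have "blinfun_apply (z + e0) T \<le> norm (z + e0) * norm T" using norm_blinfun[of "z + e0" T] by simp
      also have "\<dots> \<le> norm (z + e0)" using T(1) by (simp add: mult_left_le)
      finally show ?thesis .
    qed
    then have "norm z + 1 - 3*\<delta> \<le> norm (z + e0)" using hz he by (simp add: blinfun.add_left)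
    then show "norm z + 1 \<le> norm (z + e0) + e" by (simp add: \<delta>_def)
  qed
  define UU where "UU = (\<Union>n. span (Am n))"
  have u0: "0 \<in> UU" unfolding UU_def using span_0 by blast
  have uadd: "x1 + x2 \<in> UU" if xx: "x1 \<in> UU" "x2 \<in> UU" for x1 x2
  proof -
    obtain n1 n2 where "x1 \<in> span (Am n1)" "x2 \<in> span (Am n2)" using xx unfolding UU_def by blast
    then have "x1 \<in> span (Am (max n1 n2))" "x2 \<in> span (Am (max n1 n2))"
      using span_mono[OF Ammono'[of n1 "max n1 n2"]] span_mono[OF Ammono'[of n2 "max n1 n2"]] by auto
    then show ?thesis unfolding UU_def using span_add by blast
  qed
  have uscale: "c *\<^sub>R x1 \<in> UU" if "x1 \<in> UU" for c x1
    using that span_scale unfolding UU_def by blast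
  have "subspace UU" unfolding subspace_def using u0 uadd uscale by blast
  moreover have "D \<subseteq> UU" unfolding UU_def using drange dA span_base by blast
  ultimately have spanD: "span D \<subseteq> UU" using span_minimal by blast
  define E where "E = {v. norm v + 1 \<le> norm (v + e0)}"
  have "closed E" unfolding E_def by (rule closed_Collect_le) (auto intro!: continuous_intros)
  moreover have "span D \<subseteq> E" using spanD low unfolding UU_def E_def by blast
  ultimately have "closure (span D) \<subseteq> E" by (rule closure_minimal[rotated])
  with Zcl have ZE: "Z \<subseteq> E" by blast
  have mainZ: "norm (v + e0) = 1 + norm v" if "v \<in> Z" for v
  proof -
    have "norm (v + e0) \<le> norm v + norm e0" by (rule norm_triangle_ineq)
    then show ?thesis using ne0 ZE that unfolding E_def by auto
  qed
  have "0 \<in> Z" using spanPTZ span_0 by blast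
  then have "norm e0 = 1" using mainZ[of 0] by simp
  then have "1 \<le> norm u * norm y" using norm_bt[of u y] unfolding e0_def by simp
  moreover have "norm u * norm y \<le> norm y" using nu by (simp add: mult_left_le_one_le)
  ultimately have ny1: "norm y = 1" using ny by linarith
  have mainX: "norm (bidual_emb x + u) = 1 + norm x" for x
  proof -
    obtain g :: "'a \<Rightarrow>\<^sub>L real" where g: "norm g \<le> 1" "blinfun_apply g x = norm x" using norming_functional by blast
    obtain h :: "'b \<Rightarrow>\<^sub>L real" where h: "norm h \<le> 1" "blinfun_apply h y = norm y" using norming_functional by blast
    have bl0: "bounded_linear (\<lambda>x'. blinfun_apply g x' *\<^sub>R h)"
    proof (rule bounded_linear_intro[where K=1])
      fix x1 x2 show "blinfun_apply g (x1 + x2) *\<^sub>R h = blinfun_apply g x1 *\<^sub>R h + blinfun_apply g x2 *\<^sub>R h"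
        by (simp add: blinfun.add_right scaleR_add_left)
    next
      fix c x1 show "blinfun_apply g (c *\<^sub>R x1) *\<^sub>R h = c *\<^sub>R (blinfun_apply g x1 *\<^sub>R h)"
        by (simp add: blinfun.scaleR_right)
    next
      fix x1
      have "norm (blinfun_apply g x1 *\<^sub>R h) = \<bar>blinfun_apply g x1\<bar> * norm h" by simp
      also have "\<dots> \<le> (norm g * norm x1) * 1" using norm_blinfun[of g x1] h(1)
        by (intro mult_mono) auto
      also have "\<dots> \<le> norm x1 * 1" using g(1) by (simp add: mult_left_le_one_le)
      finally show "norm (blinfun_apply g x1 *\<^sub>R h) \<le> norm x1 * 1" .
    qed
    define T0 where "T0 = Blinfun (\<lambda>x'. blinfun_apply g x' *\<^sub>R h)"
    have T0ap: "blinfun_apply T0 = (\<lambda>x'. blinfun_apply g x' *\<^sub>R h)" unfolding T0_def using bounded_linear_Blinfun_apply[OF bl0] .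
    have nT0: "norm T0 \<le> 1"
    proof (rule norm_blinfun_bound)
      fix x1
      have "norm (blinfun_apply g x1 *\<^sub>R h) = \<bar>blinfun_apply g x1\<bar> * norm h" by simp
      also have "\<dots> \<le> (norm g * norm x1) * 1" using norm_blinfun[of g x1] h(1)
        by (intro mult_mono) auto
      also have "\<dots> \<le> 1 * norm x1" using g(1) by (simp add: mult_left_le_one_le)
      finally show "norm (blinfun_apply T0 x1) \<le> 1 * norm x1" using T0ap by simp
    qed simp
    have "norm x = blinfun_apply (ptensor x y) T0" using T0ap g(2) h(2) ny1 by (simp add: blinfun.scaleR_left)
    also have "\<dots> \<le> norm (ptensor x y) * norm T0" using norm_blinfun[of "ptensor x y" T0] by simp
    also have "\<dots> \<le> norm (ptensor x y)" using nT0 by (simp add: mult_left_le)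
    finally have npt: "norm x \<le> norm (ptensor x y)" .
    have "ptensor x y \<in> Z" using PTZ unfolding PT_def by blast
    then have "norm (ptensor x y + e0) = 1 + norm (ptensor x y)" by (rule mainZ)
    moreover have "norm (ptensor x y + e0) \<le> norm (bidual_emb x + u)"
    proof (rule norm_blinfun_bound)
      fix T
      have "blinfun_apply (ptensor x y + e0) T = blinfun_apply (bidual_emb x + u) (ycomp T y)"
        by (simp add: blinfun.add_left e0_def)
      then have "norm (blinfun_apply (ptensor x y + e0) T) \<le> norm (bidual_emb x + u) * norm (ycomp T y)"
        using norm_blinfun[of "bidual_emb x + u" "ycomp T y"] by simp
      also have "\<dots> \<le> norm (bidual_emb x + u) * norm T"
        using norm_ycomp[of T y] ny1 by (simp add: mult_left_mono)
      finally show "norm (blinfun_apply (ptensor x y + e0) T) \<le> norm (bidual_emb x + u) * norm T" .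
    qed simp
    moreover have "norm (bidual_emb x + u) \<le> norm x + 1"
      using norm_triangle_ineq[of "bidual_emb x" u] norm_be[of x] nu by linarith
    ultimately show ?thesis using npt by linarith
  qed
  have "bidual_emb (0::'a) = 0" by (rule blinfun_eqI) (simp add: blinfun.zero_right)
  then have nu1: "norm u = 1" using mainX[of 0] by simp
  show ?thesis
    using nu1 mainX ny1 mainZ unfolding Z_def e0_def by (intro exI[of _ u]) auto
qed


end
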